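(* Let $X$ be an angled $G$-complex on which $G$ acts properly and cocompactly, and suppose $\kappa(f)\le0$ for each $2$-cell $f$ of $X$. If $H$ is a subgroup of $G$, $Y$ is an $H$-cocompact $H$-complex, and $Y\to X$ is an $H$-equivariant immersion, then \[|\mathrm{nega}(H,Y)|\le\frac{2\pi\cdot\chi(H,Y)-B_+(G,X)\cdot|\mathrm{pos}(H,Y)|}{B_-(G,X)}.\]
   Context: A $G$-complex is a combinatorial 2-complex with cellular $G$-action without inversions; angles $\measuredangle(c)$ are $G$-invariant reals on corners of $2$-cells, and $Y$ carries the angles pulled back from $X$. For a $2$-cell $f$, $\kappa(f)=\sum_{c\in\mathrm{corners}(f)}\measuredangle(c)-\pi(|\partial f|-2)$ (times $|G_f|^{-1}$ for orbits). $\mathrm{link}(x)$ of a $0$-cell has a vertex per end of a $1$-cell at $x$ and an edge (with angle) per corner at $x$. For a group $K$, $|K|^{-1}=1/|K|$ if finite, else $0$; for a graph $\Delta$ with $K$-action, finitely many orbits and edge angles, $\kappa(K,\Delta)=2\pi|K|^{-1}-\sum_v\pi|K_v|^{-1}+\sum_e(\pi-\measuredangle(e))|K_e|^{-1}$ (sums over orbit representatives). For $K\le G_x$, a $K$-section of $\mathrm{link}(x)$ is a $K$-invariant subgraph with finitely many $K$-orbits. $B_-(G,X)$ is the maximum of $\kappa(K,\Delta)$ over all $0$-cells $x$, subgroups $K\le G_x$ and $K$-sections $\Delta$ of $\mathrm{link}(x)$ with $\kappa(K,\Delta)<0$ (or $-1$ if there are none); $B_+(G,X)$ is the maximum over those with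 $\kappa(K,\Delta)\ge0$ (or $0$ if none). For $v\in I^0(H,Y)$ (the $H$-orbits of $0$-cells) with representative $y$, $\kappa(v)=\kappa(H_y,\mathrm{link}(y,Y))$; $\mathrm{nega}(H,Y)=\{v:\kappa(v)<0\}$, $\mathrm{pos}(H,Y)=\{v:\kappa(v)>0\}$. $\chi(H,Y)=\sum_{I^0}|H_\sigma|^{-1}-\sum_{I^1}|H_\sigma|^{-1}+\sum_{I^2}|H_\sigma|^{-1}$ over $H$-orbits of cells. *)

theory Defs
  imports Complex_Main "HOL-Algebra.Group"
begin

text \<open>A combinatorial 2-complex: 0-cells, oriented 1-cells (with source and target),
  and 2-cells whose attaching map is a closed combinatorial path, given as a nonempty list
  of oriented 1-cells ((e,True) = e traversed forwards, (e,False) = backwards).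
  Position i of a 2-cell f with boundary length n carries the i-th boundary edge, and the
  corner (f,i) is the corner between boundary edges i and (i+1) mod n.\<close>

record ('v,'e,'f) cplx =
  cV :: "'v set"
  cE :: "'e set"
  cF :: "'f set"
  csrc :: "'e \<Rightarrow> 'v"
  ctgt :: "'e \<Rightarrow> 'v"
  cbd :: "'f \<Rightarrow> ('e \<times> bool) list"

definition otail :: "('v,'e,'f) cplx \<Rightarrow> 'e \<times> bool \<Rightarrow> 'v" where
  "otail X oe = (if snd oe then csrc X (fst oe) else ctgt X (fst oe))"

definition ohead :: "('v,'e,'f) cplx \<Rightarrow> 'e \<times> bool \<Rightarrow> 'v" where
  "ohead X oe = (if snd oe then ctgt X (fst oe) else csrc X (fst oe))"

definition blen :: "('v,'e,'f) cplx \<Rightarrow> 'f \<Rightarrow> nat" where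
  "blen X f = length (cbd X f)"

definition wf_cplx :: "('v,'e,'f) cplx \<Rightarrow> bool" where
  "wf_cplx X \<longleftrightarrow>
     (\<forall>e\<in>cE X. csrc X e \<in> cV X \<and> ctgt X e \<in> cV X) \<and>
     (\<forall>f\<in>cF X. cbd X f \<noteq> [] \<and> fst ` set (cbd X f) \<subseteq> cE X \<and>
        (\<forall>i < blen X f. ohead X (cbd X f ! i) = otail X (cbd X f ! ((i + 1) mod blen X f))))"

text \<open>Ends of 1-cells: (e,True) is the end of e at its source, (e,False) the end at its target.\<close>
definition endpt :: "('v,'e,'f) cplx \<Rightarrow> 'e \<times> bool \<Rightarrow> 'v" where
  "endpt X en = (if snd en then csrc X (fst en) else ctgt X (fst en))"

definition corners :: "('v,'e,'f) cplx \<Rightarrow> ('f \<times> nat) set" where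
  "corners X = {(f,i). f \<in> cF X \<and> i < blen X f}"

definition corner_vertex :: "('v,'e,'f) cplx \<Rightarrow> 'f \<times> nat \<Rightarrow> 'v" where
  "corner_vertex X c = ohead X (cbd X (fst c) ! snd c)"

text \<open>The link of a 0-cell x: vertices are the ends of 1-cells at x, edges are the corners
  at x; the corner (f,i) joins the end of boundary edge i where the path arrives at x with
  the end of boundary edge i+1 where the path leaves x.\<close>
definition link_verts :: "('v,'e,'f) cplx \<Rightarrow> 'v \<Rightarrow> ('e \<times> bool) set" where
  "link_verts X x = {en. fst en \<in> cE X \<and> endpt X en = x}"

definition link_edges :: "('v,'e,'f) cplx \<Rightarrow> 'v \<Rightarrow> ('f \<times> nat) set" where
  "link_edges X x = {c \<in> corners X. corner_vertex X c = x}"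

definition link_ends :: "('v,'e,'f) cplx \<Rightarrow> 'f \<times> nat \<Rightarrow> ('e \<times> bool) \<times> ('e \<times> bool)" where
  "link_ends X c = (let f = fst c; i = snd c; oe = cbd X f ! i;
                        oe' = cbd X f ! ((i + 1) mod blen X f)
                    in ((fst oe, \<not> snd oe), oe'))"

text \<open>A combinatorial map: maps on cells of each dimension (1-cells are mapped preserving the
  chosen orientations), and for each 2-cell a dihedral identification of its boundary with
  that of its image: rotation mrot and reflection flag mrefl.\<close>

record ('v,'e,'f,'w,'d,'h) cmorph =
  mV :: "'v \<Rightarrow> 'w"
  mE :: "'e \<Rightarrow> 'd"
  mF :: "'f \<Rightarrow> 'h"
  mrot :: "'f \<Rightarrow> nat"
  mrefl :: "'f \<Rightarrow> bool"

definition dpos :: "bool \<Rightarrow> nat \<Rightarrow> nat \<Rightarrow> nat \<Rightarrow> nat" where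
  "dpos r k n i = (if r then nat ((int k - int i) mod int n) else (k + i) mod n)"

definition cmorphism :: "('v,'e,'f) cplx \<Rightarrow> ('w,'d,'h) cplx \<Rightarrow> ('v,'e,'f,'w,'d,'h) cmorph \<Rightarrow> bool" where
  "cmorphism X Y m \<longleftrightarrow>
     (\<forall>v\<in>cV X. mV m v \<in> cV Y) \<and>
     (\<forall>e\<in>cE X. mE m e \<in> cE Y \<and> csrc Y (mE m e) = mV m (csrc X e) \<and> ctgt Y (mE m e) = mV m (ctgt X e)) \<and>
     (\<forall>f\<in>cF X. mF m f \<in> cF Y \<and> blen Y (mF m f) = blen X f \<and> mrot m f < blen X f \<and>
        (\<forall>i < blen X f. cbd Y (mF m f) ! dpos (mrefl m f) (mrot m f) (blen X f) i
                        = (mE m (fst (cbd X f ! i)), snd (cbd X f ! i) \<noteq> mrefl m f)))"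

text \<open>Induced map on corners: under a reflection the corner between positions i and i+1
  goes to the corner between positions k-i-1 and k-i.\<close>
definition cmapC :: "('v,'e,'f) cplx \<Rightarrow> ('v,'e,'f,'w,'d,'h) cmorph \<Rightarrow> 'f \<times> nat \<Rightarrow> 'h \<times> nat" where
  "cmapC X m c = (let f = fst c; i = snd c; n = blen X f in
     (mF m f, if mrefl m f then nat ((int (mrot m f) - int i - 1) mod int n)
              else (mrot m f + i) mod n))"

definition cmapEnd :: "('v,'e,'f,'w,'d,'h) cmorph \<Rightarrow> 'e \<times> bool \<Rightarrow> 'd \<times> bool" where
  "cmapEnd m en = (mE m (fst en), snd en)"

definition immersion :: "('v,'e,'f) cplx \<Rightarrow> ('w,'d,'h) cplx \<Rightarrow> ('v,'e,'f,'w,'d,'h) cmorph \<Rightarrow> bool" where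
  "immersion X Y m \<longleftrightarrow> cmorphism X Y m \<and>
     (\<forall>x\<in>cV X. inj_on (cmapEnd m) (link_verts X x) \<and> inj_on (cmapC X m) (link_edges X x))"

text \<open>Acting without inversions is
  equivalent to the existence of a G-invariant orientation of the 1-cells, so we take the
  orientation of X to be G-invariant (the maps preserve source and target).\<close>
definition group_cact :: "'g monoid \<Rightarrow> ('g \<Rightarrow> ('v,'e,'f,'v,'e,'f) cmorph) \<Rightarrow> ('v,'e,'f) cplx \<Rightarrow> bool" where
  "group_cact G act X \<longleftrightarrow> group G \<and> wf_cplx X \<and>
     (\<forall>g\<in>carrier G. cmorphism X X (act g) \<and> bij_betw (mV (act g)) (cV X) (cV X) \<and>
        bij_betw (mE (act g)) (cE X) (cE X) \<and> bij_betw (mF (act g)) (cF X) (cF X)) \<and>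
     (\<forall>v\<in>cV X. mV (act \<one>\<^bsub>G\<^esub>) v = v) \<and> (\<forall>e\<in>cE X. mE (act \<one>\<^bsub>G\<^esub>) e = e) \<and>
     (\<forall>f\<in>cF X. mF (act \<one>\<^bsub>G\<^esub>) f = f) \<and> (\<forall>c\<in>corners X. cmapC X (act \<one>\<^bsub>G\<^esub>) c = c) \<and>
     (\<forall>g\<in>carrier G. \<forall>h\<in>carrier G.
        (\<forall>v\<in>cV X. mV (act (g \<otimes>\<^bsub>G\<^esub> h)) v = mV (act g) (mV (act h) v)) \<and>
        (\<forall>e\<in>cE X. mE (act (g \<otimes>\<^bsub>G\<^esub> h)) e = mE (act g) (mE (act h) e)) \<and>
        (\<forall>f\<in>cF X. mF (act (g \<otimes>\<^bsub>G\<^esub> h)) f = mF (act g) (mF (act h) f)) \<and>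
        (\<forall>c\<in>corners X. cmapC X (act (g \<otimes>\<^bsub>G\<^esub> h)) c = cmapC X (act g) (cmapC X (act h) c)))"

definition orb :: "'g set \<Rightarrow> ('g \<Rightarrow> 'a \<Rightarrow> 'a) \<Rightarrow> 'a \<Rightarrow> 'a set" where
  "orb K a x = (\<lambda>g. a g x) ` K"

definition orbs :: "'g set \<Rightarrow> ('g \<Rightarrow> 'a \<Rightarrow> 'a) \<Rightarrow> 'a set \<Rightarrow> 'a set set" where
  "orbs K a S = orb K a ` S"

definition stab :: "'g set \<Rightarrow> ('g \<Rightarrow> 'a \<Rightarrow> 'a) \<Rightarrow> 'a \<Rightarrow> 'g set" where
  "stab K a x = {g \<in> K. a g x = x}"

definition invc :: "'a set \<Rightarrow> real" where
  "invc A = (if finite A then 1 / real (card A) else 0)"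

definition rep :: "'a set \<Rightarrow> 'a" where
  "rep A = (SOME x. x \<in> A)"

definition actV where "actV act = (\<lambda>g. mV (act g))"
definition actE where "actE act = (\<lambda>g. mE (act g))"
definition actF where "actF act = (\<lambda>g. mF (act g))"
definition actEnd where "actEnd act = (\<lambda>g. cmapEnd (act g))"
definition actC where "actC X act = (\<lambda>g. cmapC X (act g))"

definition kappa_graph ::
  "'g set \<Rightarrow> ('g \<Rightarrow> 'a \<Rightarrow> 'a) \<Rightarrow> 'a set \<Rightarrow> ('g \<Rightarrow> 'b \<Rightarrow> 'b) \<Rightarrow> 'b set \<Rightarrow> ('b \<Rightarrow> real) \<Rightarrow> real" where
  "kappa_graph K av Vs ae Es alpha =
     2 * pi * invc K
     - (\<Sum>Ob\<in>orbs K av Vs. pi * invc (stab K av (rep Ob)))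
     + (\<Sum>Ob\<in>orbs K ae Es. (pi - alpha (rep Ob)) * invc (stab K ae (rep Ob)))"

definition kappa_face :: "('v,'e,'f) cplx \<Rightarrow> ('f \<times> nat \<Rightarrow> real) \<Rightarrow> 'f \<Rightarrow> real" where
  "kappa_face X ang f = (\<Sum>i<blen X f. ang (f, i)) - pi * (real (blen X f) - 2)"

definition is_section ::
  "('v,'e,'f) cplx \<Rightarrow> ('g \<Rightarrow> ('v,'e,'f,'v,'e,'f) cmorph) \<Rightarrow> 'g set \<Rightarrow> 'v
     \<Rightarrow> ('e \<times> bool) set \<Rightarrow> ('f \<times> nat) set \<Rightarrow> bool" where
  "is_section X act K x Vs Es \<longleftrightarrow>
     Vs \<subseteq> link_verts X x \<and> Es \<subseteq> link_edges X x \<and>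
     (\<forall>c\<in>Es. fst (link_ends X c) \<in> Vs \<and> snd (link_ends X c) \<in> Vs) \<and>
     (\<forall>g\<in>K. \<forall>v\<in>Vs. actEnd act g v \<in> Vs) \<and>
     (\<forall>g\<in>K. \<forall>c\<in>Es. actC X act g c \<in> Es) \<and>
     finite (orbs K (actEnd act) Vs) \<and> finite (orbs K (actC X act) Es)"

definition Bvals ::
  "'g monoid \<Rightarrow> ('v,'e,'f) cplx \<Rightarrow> ('g \<Rightarrow> ('v,'e,'f,'v,'e,'f) cmorph) \<Rightarrow> ('f \<times> nat \<Rightarrow> real) \<Rightarrow> real set" where
  "Bvals G X act ang =
     {kappa_graph K (actEnd act) Vs (actC X act) Es ang | x K Vs Es.
        x \<in> cV X \<and> subgroup K G \<and> K \<subseteq> stab (carrier G) (actV act) x \<and>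
        is_section X act K x Vs Es}"

definition Bminus where
  "Bminus G X act ang =
     (let S = {k \<in> Bvals G X act ang. k < 0} in if S = {} then -1 else Max S)"

definition Bplus where
  "Bplus G X act ang =
     (let S = {k \<in> Bvals G X act ang. k \<ge> 0} in if S = {} then 0 else Max S)"

definition kappa_vertex ::
  "'g set \<Rightarrow> ('v,'e,'f) cplx \<Rightarrow> ('g \<Rightarrow> ('v,'e,'f,'v,'e,'f) cmorph) \<Rightarrow> ('f \<times> nat \<Rightarrow> real) \<Rightarrow> 'v set \<Rightarrow> real" where
  "kappa_vertex H Y act ang v =
     (let y = rep v in
      kappa_graph (stab H (actV act) y) (actEnd act) (link_verts Y y) (actC Y act) (link_edges Y y) ang)"

definition nega where
  "nega H Y act ang = {v \<in> orbs H (actV act) (cV Y). kappa_vertex H Y act ang v < 0}"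

definition posi where
  "posi H Y act ang = {v \<in> orbs H (actV act) (cV Y). kappa_vertex H Y act ang v > 0}"

definition euler_char :: "'g set \<Rightarrow> ('v,'e,'f) cplx \<Rightarrow> ('g \<Rightarrow> ('v,'e,'f,'v,'e,'f) cmorph) \<Rightarrow> real" where
  "euler_char H Y act =
     (\<Sum>Ob\<in>orbs H (actV act) (cV Y). invc (stab H (actV act) (rep Ob)))
     - (\<Sum>Ob\<in>orbs H (actE act) (cE Y). invc (stab H (actE act) (rep Ob)))
     + (\<Sum>Ob\<in>orbs H (actF act) (cF Y). invc (stab H (actF act) (rep Ob)))"

definition proper_act where
  "proper_act K X act \<longleftrightarrow>
     (\<forall>v\<in>cV X. finite (stab K (actV act) v)) \<and> (\<forall>e\<in>cE X. finite (stab K (actE act) e)) \<and>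
     (\<forall>f\<in>cF X. finite (stab K (actF act) f))"

definition cocompact_act where
  "cocompact_act K X act \<longleftrightarrow>
     finite (orbs K (actV act) (cV X)) \<and> finite (orbs K (actE act) (cE X)) \<and>
     finite (orbs K (actF act) (cF X))"

definition equivariant where
  "equivariant H Y X actY actX phi \<longleftrightarrow>
     (\<forall>h\<in>H. (\<forall>y\<in>cV Y. mV phi (mV (actY h) y) = mV (actX h) (mV phi y)) \<and>
        (\<forall>e\<in>cE Y. mE phi (mE (actY h) e) = mE (actX h) (mE phi e)) \<and>
        (\<forall>f\<in>cF Y. mF phi (mF (actY h) f) = mF (actX h) (mF phi f)) \<and>
        (\<forall>c\<in>corners Y. cmapC Y phi (cmapC Y (actY h) c) = cmapC X (actX h) (cmapC Y phi c)))"

end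

theory Submission
  imports Defs
begin


definition act_ax :: "'g monoid \<Rightarrow> 'g set \<Rightarrow> ('g \<Rightarrow> 'a \<Rightarrow> 'a) \<Rightarrow> 'a set \<Rightarrow> bool" where
 "act_ax G K a S \<longleftrightarrow> group G \<and> subgroup K G \<and> (\<forall>g\<in>K. \<forall>x\<in>S. a g x \<in> S) \<and>
    (\<forall>x\<in>S. a \<one>\<^bsub>G\<^esub> x = x) \<and> (\<forall>g\<in>K. \<forall>h\<in>K. \<forall>x\<in>S. a (g \<otimes>\<^bsub>G\<^esub> h) x = a g (a h x))"

definition wsum :: "'g set \<Rightarrow> ('g \<Rightarrow> 'a \<Rightarrow> 'a) \<Rightarrow> 'a set \<Rightarrow> ('a \<Rightarrow> real) \<Rightarrow> real" where
 "wsum K a S F = (\<Sum>Ob\<in>orbs K a S. F (rep Ob) * invc (stab K a (rep Ob)))"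

definition finv :: "'g set \<Rightarrow> ('g \<Rightarrow> 'a \<Rightarrow> 'a) \<Rightarrow> 'a set \<Rightarrow> ('a \<Rightarrow> 'b) \<Rightarrow> bool" where
 "finv K a S F \<longleftrightarrow> (\<forall>g\<in>K. \<forall>x\<in>S. F (a g x) = F x)"

lemma kappa_graph_wsum:
  "kappa_graph K av Vs ae Es alpha = 2 * pi * invc K - wsum K av Vs (\<lambda>_. pi) + wsum K ae Es (\<lambda>c. pi - alpha c)"
  unfolding kappa_graph_def wsum_def by simp

lemma c1: assumes "group G" "g \<in> carrier G" "k \<in> carrier G"
  shows "inv\<^bsub>G\<^esub> g \<otimes>\<^bsub>G\<^esub> (g \<otimes>\<^bsub>G\<^esub> k \<otimes>\<^bsub>G\<^esub> inv\<^bsub>G\<^esub> g) \<otimes>\<^bsub>G\<^esub> g = k"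
proof -
  interpret group G by fact
  have e: "inv\<^bsub>G\<^esub> g \<otimes>\<^bsub>G\<^esub> (g \<otimes>\<^bsub>G\<^esub> k) = k"
    using assms by (simp add: m_assoc[symmetric])
  show ?thesis using assms by (simp add: m_assoc e)
qed
lemma c2: "group G \<Longrightarrow> g \<in> carrier G \<Longrightarrow> k \<in> carrier G \<Longrightarrow> g \<otimes>\<^bsub>G\<^esub> (inv\<^bsub>G\<^esub> g \<otimes>\<^bsub>G\<^esub> k \<otimes>\<^bsub>G\<^esub> g) \<otimes>\<^bsub>G\<^esub> inv\<^bsub>G\<^esub> g = k"
  using c1[of G "inv\<^bsub>G\<^esub> g" k] by (simp add: group.inv_inv group.inv_closed)

context
  fixes G K a S
  assumes A: "act_ax G K a S"
begin

lemma grp: "group G" using A unfolding act_ax_def by blast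
lemma sgp: "subgroup K G" using A unfolding act_ax_def by blast
lemma cl: "g \<in> K \<Longrightarrow> x \<in> S \<Longrightarrow> a g x \<in> S" using A unfolding act_ax_def by blast
lemma one: "x \<in> S \<Longrightarrow> a \<one>\<^bsub>G\<^esub> x = x" using A unfolding act_ax_def by blast
lemma comp: "g \<in> K \<Longrightarrow> h \<in> K \<Longrightarrow> x \<in> S \<Longrightarrow> a (g \<otimes>\<^bsub>G\<^esub> h) x = a g (a h x)"
  using A unfolding act_ax_def by blast

lemma Kc: "g \<in> K \<Longrightarrow> g \<in> carrier G" using subgroup.subset[OF sgp] by blast
lemma invK: "g \<in> K \<Longrightarrow> inv\<^bsub>G\<^esub> g \<in> K" by (rule subgroup.m_inv_closed[OF sgp])
lemma mK: "g \<in> K \<Longrightarrow> h \<in> K \<Longrightarrow> g \<otimes>\<^bsub>G\<^esub> h \<in> K" by (rule subgroup.m_closed[OF sgp])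
lemma oneK: "\<one>\<^bsub>G\<^esub> \<in> K" by (rule subgroup.one_closed[OF sgp])

lemma inv_act: "g \<in> K \<Longrightarrow> x \<in> S \<Longrightarrow> a (inv\<^bsub>G\<^esub> g) (a g x) = x"
  by (metis comp invK one Kc group.l_inv grp)
lemma act_inv: "g \<in> K \<Longrightarrow> x \<in> S \<Longrightarrow> a g (a (inv\<^bsub>G\<^esub> g) x) = x"
  by (metis comp invK one Kc group.r_inv grp)

lemma orb_sub: "x \<in> S \<Longrightarrow> orb K a x \<subseteq> S" unfolding orb_def using cl by blast
lemma orb_self: "x \<in> S \<Longrightarrow> x \<in> orb K a x" unfolding orb_def using one oneK by force
lemma orb_eq: "x \<in> S \<Longrightarrow> y \<in> orb K a x \<Longrightarrow> orb K a y = orb K a x"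
proof -
  assume x: "x \<in> S" and y: "y \<in> orb K a x"
  then obtain g where g: "g \<in> K" "y = a g x" unfolding orb_def by blast
  show ?thesis
  proof
    show "orb K a y \<subseteq> orb K a x" unfolding orb_def
    proof
      fix z assume "z \<in> (\<lambda>g. a g y) ` K"
      then obtain h where h: "h \<in> K" "z = a h y" by blast
      have "z = a (h \<otimes>\<^bsub>G\<^esub> g) x" using comp[OF h(1) g(1) x] h g by simp
      thus "z \<in> (\<lambda>g. a g x) ` K" using h g mK by blast
    qed
    show "orb K a x \<subseteq> orb K a y" unfolding orb_def
    proof
      fix z assume "z \<in> (\<lambda>g. a g x) ` K"
      then obtain h where h: "h \<in> K" "z = a h x" by blast
      have "a (h \<otimes>\<^bsub>G\<^esub> inv\<^bsub>G\<^esub> g) (a g x) = a h (a (inv\<^bsub>G\<^esub> g) (a g x))"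
        using comp[OF h(1) invK[OF g(1)] cl[OF g(1) x]] .
      hence "z = a (h \<otimes>\<^bsub>G\<^esub> inv\<^bsub>G\<^esub> g) y" using g h x by (simp add: inv_act)
      thus "z \<in> (\<lambda>g. a g y) ` K" using h g by (auto intro: mK invK)
    qed
  qed
qed

lemma orb_nonempty: "orb K a x \<noteq> {}" unfolding orb_def using oneK by blast

lemma rep_in: "Ob \<in> orbs K a S \<Longrightarrow> rep Ob \<in> Ob"
  unfolding orbs_def rep_def using orb_nonempty by (metis ex_in_conv imageE someI_ex)

lemma rep_S: "Ob \<in> orbs K a S \<Longrightarrow> rep Ob \<in> S"
  using rep_in orb_sub unfolding orbs_def by blast

lemma orb_rep: "Ob \<in> orbs K a S \<Longrightarrow> orb K a (rep Ob) = Ob"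
  using rep_in orb_eq unfolding orbs_def by blast

lemma stab_conj:
  assumes g: "g \<in> K" and x: "x \<in> S"
  shows "bij_betw (\<lambda>k. g \<otimes>\<^bsub>G\<^esub> k \<otimes>\<^bsub>G\<^esub> inv\<^bsub>G\<^esub> g) (stab K a x) (stab K a (a g x))"
proof (rule bij_betw_byWitness[where f'="\<lambda>k. inv\<^bsub>G\<^esub> g \<otimes>\<^bsub>G\<^esub> k \<otimes>\<^bsub>G\<^esub> g"])
  have gc: "g \<in> carrier G" by (rule Kc[OF g])
  show "\<forall>k\<in>stab K a x. inv\<^bsub>G\<^esub> g \<otimes>\<^bsub>G\<^esub> (g \<otimes>\<^bsub>G\<^esub> k \<otimes>\<^bsub>G\<^esub> inv\<^bsub>G\<^esub> g) \<otimes>\<^bsub>G\<^esub> g = k"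
    unfolding stab_def using gc by (auto simp: c1 grp Kc)
  show "\<forall>k\<in>stab K a (a g x). g \<otimes>\<^bsub>G\<^esub> (inv\<^bsub>G\<^esub> g \<otimes>\<^bsub>G\<^esub> k \<otimes>\<^bsub>G\<^esub> g) \<otimes>\<^bsub>G\<^esub> inv\<^bsub>G\<^esub> g = k"
    unfolding stab_def using gc by (auto simp: c2 grp Kc)
  show "(\<lambda>k. g \<otimes>\<^bsub>G\<^esub> k \<otimes>\<^bsub>G\<^esub> inv\<^bsub>G\<^esub> g) ` stab K a x \<subseteq> stab K a (a g x)"
  proof
    fix z assume "z \<in> (\<lambda>k. g \<otimes>\<^bsub>G\<^esub> k \<otimes>\<^bsub>G\<^esub> inv\<^bsub>G\<^esub> g) ` stab K a x"
    then obtain k where k: "k \<in> K" "a k x = x" "z = g \<otimes>\<^bsub>G\<^esub> k \<otimes>\<^bsub>G\<^esub> inv\<^bsub>G\<^esub> g" unfolding stab_def by blast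
    have "z \<in> K" using k g by (simp add: mK invK)
    moreover have "a z (a g x) = a g x" using k g x
      by (simp add: comp mK invK cl inv_act)
    ultimately show "z \<in> stab K a (a g x)" unfolding stab_def by blast
  qed
  show "(\<lambda>k. inv\<^bsub>G\<^esub> g \<otimes>\<^bsub>G\<^esub> k \<otimes>\<^bsub>G\<^esub> g) ` stab K a (a g x) \<subseteq> stab K a x"
  proof
    fix z assume "z \<in> (\<lambda>k. inv\<^bsub>G\<^esub> g \<otimes>\<^bsub>G\<^esub> k \<otimes>\<^bsub>G\<^esub> g) ` stab K a (a g x)"
    then obtain k where k: "k \<in> K" "a k (a g x) = a g x" "z = inv\<^bsub>G\<^esub> g \<otimes>\<^bsub>G\<^esub> k \<otimes>\<^bsub>G\<^esub> g" unfolding stab_def by blast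
    have "z \<in> K" using k g by (simp add: mK invK)
    moreover have "a z x = x" using k g x
      by (simp add: comp mK invK cl inv_act)
    ultimately show "z \<in> stab K a x" unfolding stab_def by blast
  qed
qed

lemma invc_stab_act: "g \<in> K \<Longrightarrow> x \<in> S \<Longrightarrow> invc (stab K a (a g x)) = invc (stab K a x)"
  using stab_conj unfolding invc_def
  by (metis bij_betw_finite bij_betw_same_card)

lemma invc_stab_orb: "x \<in> S \<Longrightarrow> y \<in> orb K a x \<Longrightarrow> invc (stab K a y) = invc (stab K a x)"
  unfolding orb_def using invc_stab_act by blast

lemma finv_orb: "finv K a S F \<Longrightarrow> x \<in> S \<Longrightarrow> y \<in> orb K a x \<Longrightarrow> F y = F x"
  unfolding orb_def finv_def by blast

lemma summand_any:
  assumes "finv K a S F" "Ob \<in> orbs K a S" "x \<in> Ob"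
  shows "F (rep Ob) * invc (stab K a (rep Ob)) = F x * invc (stab K a x)"
proof -
  obtain z where z: "z \<in> S" "Ob = orb K a z" using assms(2) unfolding orbs_def by blast
  have "rep Ob \<in> Ob" using rep_in assms(2) .
  thus ?thesis using assms z finv_orb invc_stab_orb by metis
qed

lemma stab_subgroup:
  assumes y: "y \<in> S" shows "subgroup (stab K a y) G"
proof
  show "stab K a y \<subseteq> carrier G" unfolding stab_def using Kc by blast
  show "\<And>x z. x \<in> stab K a y \<Longrightarrow> z \<in> stab K a y \<Longrightarrow> x \<otimes>\<^bsub>G\<^esub> z \<in> stab K a y"
    unfolding stab_def using y by (auto simp: comp mK)
  show "\<one>\<^bsub>G\<^esub> \<in> stab K a y" unfolding stab_def using y oneK one by blast
  show "\<And>x. x \<in> stab K a y \<Longrightarrow> inv\<^bsub>G\<^esub> x \<in> stab K a y"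
    unfolding stab_def using y by (auto simp: invK) (metis inv_act)
qed

lemma act_ax_restrict:
  assumes "subgroup K' G" "K' \<subseteq> K" "S' \<subseteq> S" "\<forall>g\<in>K'. \<forall>x\<in>S'. a g x \<in> S'"
  shows "act_ax G K' a S'"
  using assms A unfolding act_ax_def by (auto simp: subset_iff)

end




context
  fixes G K a S
  assumes A: "act_ax G K a S"
begin

lemma orbit_stab_card:
  assumes x: "x \<in> S" and fK: "finite K"
  shows "card (orb K a x) * card (stab K a x) = card K"
proof -
  have fo: "finite (orb K a x)" unfolding orb_def using fK by simp
  have "card K = (\<Sum>y\<in>orb K a x. card {g\<in>K. a g x = y})"
  proof -
    have "(\<Sum>y\<in>orb K a x. \<Sum>g\<in>{g\<in>K. a g x = y}. (1::nat)) = (\<Sum>g\<in>K. 1)"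
      by (rule sum.group[OF fK fo]) (auto simp: orb_def)
    thus ?thesis by simp
  qed
  also have "\<dots> = (\<Sum>y\<in>orb K a x. card (stab K a x))"
  proof (rule sum.cong[OF refl])
    fix y assume "y \<in> orb K a x"
    then obtain g0 where g0: "g0 \<in> K" "y = a g0 x" unfolding orb_def by blast
    have "bij_betw (\<lambda>k. g0 \<otimes>\<^bsub>G\<^esub> k) (stab K a x) {g\<in>K. a g x = y}"
    proof (rule bij_betw_byWitness[where f'="\<lambda>k. inv\<^bsub>G\<^esub> g0 \<otimes>\<^bsub>G\<^esub> k"])
      interpret group G by (rule grp[OF A])
      have g0c: "g0 \<in> carrier G" using Kc[OF A g0(1)] .
      show "\<forall>k\<in>stab K a x. inv\<^bsub>G\<^esub> g0 \<otimes>\<^bsub>G\<^esub> (g0 \<otimes>\<^bsub>G\<^esub> k) = k"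
        unfolding stab_def using g0c Kc[OF A] by (auto simp: m_assoc[symmetric])
      show "\<forall>k\<in>{g\<in>K. a g x = y}. g0 \<otimes>\<^bsub>G\<^esub> (inv\<^bsub>G\<^esub> g0 \<otimes>\<^bsub>G\<^esub> k) = k"
        using g0c Kc[OF A] by (auto simp: m_assoc[symmetric])
      show "(\<lambda>k. g0 \<otimes>\<^bsub>G\<^esub> k) ` stab K a x \<subseteq> {g\<in>K. a g x = y}"
        unfolding stab_def using g0 x by (auto simp: comp[OF A] mK[OF A])
      show "(\<lambda>k. inv\<^bsub>G\<^esub> g0 \<otimes>\<^bsub>G\<^esub> k) ` {g\<in>K. a g x = y} \<subseteq> stab K a x"
        unfolding stab_def using g0 x
        by (auto simp: comp[OF A] mK[OF A] invK[OF A] inv_act[OF A])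
    qed
    thus "card {g\<in>K. a g x = y} = card (stab K a x)" by (simp add: bij_betw_same_card)
  qed
  also have "\<dots> = card (orb K a x) * card (stab K a x)" by simp
  finally show ?thesis by simp
qed

lemma wsum_finite_group:
  assumes fK: "finite K" and fS: "finite S" and F: "finv K a S F"
  shows "wsum K a S F = (\<Sum>c\<in>S. F c) / real (card K)"
proof -
  have fO: "finite (orbs K a S)" unfolding orbs_def using fS by simp
  have cK: "card K > 0" using fK oneK[OF A] card_gt_0_iff by blast
  have "(\<Sum>c\<in>S. F c) = (\<Sum>Ob\<in>orbs K a S. \<Sum>c\<in>{c\<in>S. orb K a c = Ob}. F c)"
    by (rule sum.group[OF fS fO, symmetric]) (auto simp: orbs_def)
  also have "\<dots> = (\<Sum>Ob\<in>orbs K a S. F (rep Ob) * invc (stab K a (rep Ob)) * real (card K))"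
  proof (rule sum.cong[OF refl])
    fix Ob assume Ob: "Ob \<in> orbs K a S"
    have r: "rep Ob \<in> S" "orb K a (rep Ob) = Ob" using rep_S[OF A Ob] orb_rep[OF A Ob] by auto
    have e: "{c\<in>S. orb K a c = Ob} = Ob"
      using Ob orb_eq[OF A] orb_self[OF A] orb_sub[OF A] unfolding orbs_def by blast
    have "(\<Sum>c\<in>Ob. F c) = (\<Sum>c\<in>Ob. F (rep Ob))"
      using finv_orb[OF A F r(1)] r(2) by (intro sum.cong) auto
    also have "\<dots> = real (card Ob) * F (rep Ob)" by simp
    also have "\<dots> = F (rep Ob) * invc (stab K a (rep Ob)) * real (card K)"
    proof -
      have oc: "card Ob * card (stab K a (rep Ob)) = card K"
        using orbit_stab_card[OF r(1) fK] r(2) by simp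
      have fs: "finite (stab K a (rep Ob))" using fK unfolding stab_def by simp
      have "card (stab K a (rep Ob)) > 0" using oc cK by (cases "card (stab K a (rep Ob))") auto
      hence "real (card K) / real (card (stab K a (rep Ob))) = real (card Ob)"
        using oc by (simp add: field_simps flip: of_nat_mult)
      moreover have "F (rep Ob) * invc (stab K a (rep Ob)) * real (card K)
          = F (rep Ob) * (real (card K) / real (card (stab K a (rep Ob))))"
        unfolding invc_def using fs by simp
      ultimately show ?thesis by (metis mult.commute)
    qed
    finally show "(\<Sum>c\<in>{c\<in>S. orb K a c = Ob}. F c) = F (rep Ob) * invc (stab K a (rep Ob)) * real (card K)"
      using e by simp
  qed
  also have "\<dots> = wsum K a S F * real (card K)"
    unfolding wsum_def by (simp add: sum_distrib_right)
  finally show ?thesis using cK by (simp add: field_simps)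
qed

end




lemma fibration:
  assumes A: "act_ax G K a S" and B: "act_ax G K b V"
    and pV: "\<forall>s\<in>S. p s \<in> V" and peq: "\<forall>g\<in>K. \<forall>s\<in>S. p (a g s) = b g (p s)"
    and fS: "finite (orbs K a S)" and fV: "finite (orbs K b V)" and F: "finv K a S F"
  shows "(\<Sum>Ob\<in>orbs K b V. wsum (stab K b (rep Ob)) a {s\<in>S. p s = rep Ob} F) = wsum K a S F"
proof -
  define h where "h Q = F (rep Q) * invc (stab K a (rep Q))" for Q
  have "wsum K a S F = (\<Sum>Ob\<in>orbs K b V. \<Sum>Q\<in>{Q\<in>orbs K a S. orb K b (p (rep Q)) = Ob}. h Q)"
    unfolding wsum_def h_def
  proof (rule sum.group[OF fS fV, symmetric])
    show "(\<lambda>Q. orb K b (p (rep Q))) ` orbs K a S \<subseteq> orbs K b V"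
    proof
      fix z assume "z \<in> (\<lambda>Q. orb K b (p (rep Q))) ` orbs K a S"
      then obtain Q where Q: "Q \<in> orbs K a S" "z = orb K b (p (rep Q))" by blast
      have "p (rep Q) \<in> V" using pV rep_S[OF A Q(1)] by blast
      thus "z \<in> orbs K b V" unfolding orbs_def using Q by blast
    qed
  qed
  also have "\<dots> = (\<Sum>Ob\<in>orbs K b V. wsum (stab K b (rep Ob)) a {s\<in>S. p s = rep Ob} F)"
  proof (rule sum.cong[OF refl])
    fix Ob assume Ob: "Ob \<in> orbs K b V"
    define y where "y = rep Ob"
    have yV: "y \<in> V" and oy: "orb K b y = Ob" using rep_S[OF B Ob] orb_rep[OF B Ob] y_def by auto
    define Ky where "Ky = stab K b y"
    define Fy where "Fy = {s\<in>S. p s = y}"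
    have sg: "subgroup Ky G" unfolding Ky_def by (rule stab_subgroup[OF B yV])
    have KyK: "Ky \<subseteq> K" unfolding Ky_def stab_def by auto
    have Ay: "act_ax G Ky a Fy"
    proof (rule act_ax_restrict[OF A sg KyK])
      show "Fy \<subseteq> S" unfolding Fy_def by auto
      show "\<forall>g\<in>Ky. \<forall>x\<in>Fy. a g x \<in> Fy" unfolding Fy_def Ky_def stab_def
        using peq cl[OF A] by auto
    qed
    have stabeq: "stab Ky a s = stab K a s" if "s \<in> Fy" for s
    proof -
      have "g \<in> Ky" if "g \<in> K" "a g s = s" for g
      proof -
        have "b g y = y" using peq that \<open>s \<in> Fy\<close> unfolding Fy_def by (metis (mono_tags, lifting) mem_Collect_eq)
        thus ?thesis unfolding Ky_def stab_def using that by auto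
      qed
      thus ?thesis using KyK unfolding stab_def by auto
    qed
    define Phi where "Phi Q' = orb K a (rep Q')" for Q'
    have bij: "bij_betw Phi (orbs Ky a Fy) {Q\<in>orbs K a S. orb K b (p (rep Q)) = Ob}"
      unfolding bij_betw_def
    proof
      show "inj_on Phi (orbs Ky a Fy)"
      proof
        fix O1 O2 assume O1: "O1 \<in> orbs Ky a Fy" and O2: "O2 \<in> orbs Ky a Fy" and e: "Phi O1 = Phi O2"
        define s1 where "s1 = rep O1" define s2 where "s2 = rep O2"
        have s1: "s1 \<in> Fy" "orb Ky a s1 = O1" using rep_S[OF Ay O1] orb_rep[OF Ay O1] s1_def by auto
        have s2: "s2 \<in> Fy" "orb Ky a s2 = O2" using rep_S[OF Ay O2] orb_rep[OF Ay O2] s2_def by auto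
        have s1S: "s1 \<in> S" and s2S: "s2 \<in> S" using s1 s2 unfolding Fy_def by auto
        have "s2 \<in> orb K a s1" using e orb_self[OF A s2S] unfolding Phi_def s1_def s2_def by simp
        then obtain g where g: "g \<in> K" "s2 = a g s1" unfolding orb_def by blast
        have "b g y = y" using peq g s1 s2 unfolding Fy_def by (metis (mono_tags, lifting) mem_Collect_eq)
        hence "g \<in> Ky" unfolding Ky_def stab_def using g by auto
        hence "s2 \<in> orb Ky a s1" unfolding orb_def using g by blast
        thus "O1 = O2" using orb_eq[OF Ay s1(1)] s1 s2 by simp
      qed
      show "Phi ` orbs Ky a Fy = {Q\<in>orbs K a S. orb K b (p (rep Q)) = Ob}"
      proof
        show "Phi ` orbs Ky a Fy \<subseteq> {Q\<in>orbs K a S. orb K b (p (rep Q)) = Ob}"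
        proof
          fix Q assume "Q \<in> Phi ` orbs Ky a Fy"
          then obtain Q' where Q': "Q' \<in> orbs Ky a Fy" "Q = Phi Q'" by blast
          define s where "s = rep Q'"
          have s: "s \<in> Fy" using rep_S[OF Ay Q'(1)] s_def by auto
          hence sS: "s \<in> S" and ps: "p s = y" unfolding Fy_def by auto
          have Oo: "Q = orb K a s" using Q' unfolding Phi_def s_def by simp
          have OS: "Q \<in> orbs K a S" using Oo sS unfolding orbs_def by blast
          have "rep Q \<in> orb K a s" using rep_in[OF A OS] Oo by simp
          then obtain g where g: "g \<in> K" "rep Q = a g s" unfolding orb_def by blast
          have "p (rep Q) = b g y" using g peq sS ps by auto
          hence "p (rep Q) \<in> orb K b y" unfolding orb_def using g by blast
          hence "orb K b (p (rep Q)) = Ob" using orb_eq[OF B yV] oy by simp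
          thus "Q \<in> {Q\<in>orbs K a S. orb K b (p (rep Q)) = Ob}" using OS by blast
        qed
        show "{Q\<in>orbs K a S. orb K b (p (rep Q)) = Ob} \<subseteq> Phi ` orbs Ky a Fy"
        proof
          fix Q assume Q: "Q \<in> {Q\<in>orbs K a S. orb K b (p (rep Q)) = Ob}"
          hence OS: "Q \<in> orbs K a S" and Oe: "orb K b (p (rep Q)) = Ob" by auto
          define t where "t = rep Q"
          have tS: "t \<in> S" and ot: "orb K a t = Q" using rep_S[OF A OS] orb_rep[OF A OS] t_def by auto
          have "p t \<in> orb K b y" using Oe oy orb_self[OF B] pV tS unfolding t_def by metis
          then obtain g where g: "g \<in> K" "p t = b g y" unfolding orb_def by blast
          define s where "s = a (inv\<^bsub>G\<^esub> g) t"
          have sS: "s \<in> S" unfolding s_def using cl[OF A invK[OF A g(1)] tS] .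
          have "p s = b (inv\<^bsub>G\<^esub> g) (p t)" unfolding s_def using peq invK[OF A g(1)] tS by auto
          also have "\<dots> = y" using g inv_act[OF B g(1) yV] by simp
          finally have sF: "s \<in> Fy" unfolding Fy_def using sS by simp
          have "t = a g s" unfolding s_def using act_inv[OF A g(1) tS] by simp
          hence "t \<in> orb K a s" unfolding orb_def using g by blast
          hence ots: "orb K a s = Q" using orb_eq[OF A sS] ot by simp
          have Q'in: "orb Ky a s \<in> orbs Ky a Fy" unfolding orbs_def using sF by blast
          have "rep (orb Ky a s) \<in> orb Ky a s" using rep_in[OF Ay Q'in] .
          hence "rep (orb Ky a s) \<in> orb K a s" using KyK unfolding orb_def by blast
          hence "Phi (orb Ky a s) = Q" unfolding Phi_def using orb_eq[OF A sS] ots by simp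
          thus "Q \<in> Phi ` orbs Ky a Fy" using Q'in by blast
        qed
      qed
    qed
    have "wsum Ky a Fy F = (\<Sum>Q'\<in>orbs Ky a Fy. h (Phi Q'))"
      unfolding wsum_def
    proof (rule sum.cong[OF refl])
      fix Q' assume Q': "Q' \<in> orbs Ky a Fy"
      define s where "s = rep Q'"
      have s: "s \<in> Fy" using rep_S[OF Ay Q'] s_def by auto
      hence sS: "s \<in> S" unfolding Fy_def by auto
      have OS: "Phi Q' \<in> orbs K a S" unfolding Phi_def orbs_def using sS s_def by blast
      have "h (Phi Q') = F s * invc (stab K a s)"
        unfolding h_def using summand_any[OF A F OS] orb_self[OF A sS] unfolding Phi_def s_def by simp
      thus "F (rep Q') * invc (stab Ky a (rep Q')) = h (Phi Q')"
        using stabeq[OF s] s_def by simp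
    qed
    also have "\<dots> = (\<Sum>Q\<in>{Q\<in>orbs K a S. orb K b (p (rep Q)) = Ob}. h Q)"
      by (rule sum.reindex_bij_betw[OF bij])
    finally show "(\<Sum>Q\<in>{Q\<in>orbs K a S. orb K b (p (rep Q)) = Ob}. h Q) = wsum (stab K b (rep Ob)) a {s\<in>S. p s = rep Ob} F"
      unfolding Ky_def Fy_def y_def by simp
  qed
  finally show ?thesis by simp
qed

lemma inj_reindex:
  assumes A: "act_ax G K a S" and B: "act_ax G K b T"
    and inj: "inj_on phi S" and img: "phi ` S = T"
    and eqv: "\<forall>g\<in>K. \<forall>s\<in>S. phi (a g s) = b g (phi s)"
    and F: "finv K a S F" and F': "finv K b T F'" and FF: "\<forall>s\<in>S. F' (phi s) = F s"
  shows "wsum K b T F' = wsum K a S F"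
proof -
  have orbimg: "orb K b (phi s) = phi ` orb K a s" if "s \<in> S" for s
    unfolding orb_def using eqv that by (auto simp: image_iff)
  have oT: "orbs K b T = (\<lambda>Q. phi ` Q) ` orbs K a S"
    unfolding orbs_def using orbimg img by (auto simp: image_iff)
  have injO: "inj_on (\<lambda>Q. phi ` Q) (orbs K a S)"
  proof
    fix O1 O2 assume O1: "O1 \<in> orbs K a S" and O2: "O2 \<in> orbs K a S" and e: "phi ` O1 = phi ` O2"
    have "O1 \<subseteq> S" "O2 \<subseteq> S" using O1 O2 orb_sub[OF A] unfolding orbs_def by auto
    thus "O1 = O2" using e inj by (metis inj_on_image_eq_iff)
  qed
  have stabeq: "stab K b (phi s) = stab K a s" if "s \<in> S" for s
    unfolding stab_def using eqv that inj cl[OF A] by (auto simp: inj_on_def) metis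
  have "wsum K b T F' = (\<Sum>Q\<in>orbs K a S. F' (rep (phi ` Q)) * invc (stab K b (rep (phi ` Q))))"
    unfolding wsum_def oT by (rule sum.reindex[OF injO, unfolded comp_def])
  also have "\<dots> = wsum K a S F" unfolding wsum_def
  proof (rule sum.cong[OF refl])
    fix Q assume Q: "Q \<in> orbs K a S"
    define s where "s = rep Q"
    have s: "s \<in> S" "s \<in> Q" using rep_S[OF A Q] rep_in[OF A Q] s_def by auto
    have OT: "phi ` Q \<in> orbs K b T" using Q oT by blast
    have "F' (rep (phi ` Q)) * invc (stab K b (rep (phi ` Q))) = F' (phi s) * invc (stab K b (phi s))"
      using summand_any[OF B F' OT] s by blast
    also have "\<dots> = F s * invc (stab K a s)" using stabeq[OF s(1)] FF s by simp
    finally show "F' (rep (phi ` Q)) * invc (stab K b (rep (phi ` Q))) = F (rep Q) * invc (stab K a (rep Q))"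
      using s_def by simp
  qed
  finally show ?thesis .
qed




lemma ar1: "(n::nat) > 0 \<Longrightarrow> ((k + i) mod n + 1) mod n = (k + (i + 1) mod n) mod n"
  by (simp add: mod_simps)

lemma ar2: "(n::nat) > 0 \<Longrightarrow> nat ((int k - int i - 1) mod int n) = nat ((int k - int ((i + 1) mod n)) mod int n)"
proof -
  assume n: "n > 0"
  have "int ((i + 1) mod n) = (int i + 1) mod int n" by (simp add: of_nat_mod add.commute)
  hence "(int k - int ((i + 1) mod n)) mod int n = (int k - (int i + 1)) mod int n"
    by (simp add: mod_diff_right_eq)
  thus ?thesis by (simp add: algebra_simps)
qed

lemma ar3: "(n::nat) > 0 \<Longrightarrow> (nat ((int k - int i - 1) mod int n) + 1) mod n = nat ((int k - int i) mod int n)"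
proof -
  assume n: "n > 0"
  have nn: "(int k - int i - 1) mod int n \<ge> 0" using n by simp
  have "int ((nat ((int k - int i - 1) mod int n) + 1) mod n)
      = ((int k - int i - 1) mod int n + 1) mod int n" using nn by (simp add: of_nat_mod add.commute)
  also have "\<dots> = (int k - int i - 1 + 1) mod int n" by (simp add: mod_add_left_eq)
  also have "\<dots> = (int k - int i) mod int n" by simp
  finally show ?thesis by (metis nat_int)
qed

lemma ar_lt: "(n::nat) > 0 \<Longrightarrow> nat ((x::int) mod int n) < n"
  by (simp add: nat_less_iff)

lemma mod_inj_int: "(x::int) mod n = y mod n \<Longrightarrow> \<bar>x - y\<bar> < n \<Longrightarrow> x = y"
proof (rule ccontr)
  assume e: "x mod n = y mod n" and l: "\<bar>x - y\<bar> < n" and ne: "x \<noteq> y"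
  have "n dvd x - y" using e by (simp add: mod_eq_dvd_iff)
  hence "\<bar>n\<bar> \<le> \<bar>x - y\<bar>" using ne by (intro dvd_imp_le_int) auto
  thus False using l by simp
qed

lemma ohead_m: "cmorphism A B m \<Longrightarrow> e \<in> cE A \<Longrightarrow> ohead B (mE m e, s) = mV m (ohead A (e, s))"
  unfolding cmorphism_def ohead_def by auto
lemma otail_m: "cmorphism A B m \<Longrightarrow> e \<in> cE A \<Longrightarrow> otail B (mE m e, s) = mV m (otail A (e, s))"
  unfolding cmorphism_def otail_def by auto
lemma ohead_flip: "ohead X (e, \<not> s) = otail X (e, s)"
  unfolding ohead_def otail_def by auto

lemma bd_edge: "wf_cplx A \<Longrightarrow> f \<in> cF A \<Longrightarrow> i < blen A f \<Longrightarrow> fst (cbd A f ! i) \<in> cE A"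
  unfolding wf_cplx_def blen_def by (meson image_subset_iff nth_mem)

lemma blen_pos: "wf_cplx A \<Longrightarrow> f \<in> cF A \<Longrightarrow> blen A f > 0"
  unfolding wf_cplx_def blen_def by auto

lemma cm_corner:
  assumes m: "cmorphism A B m" and wf: "wf_cplx A" and f: "f \<in> cF A" and i: "i < blen A f"
  shows "fst (cmapC A m (f, i)) = mF m f" "snd (cmapC A m (f, i)) < blen A f"
    "blen B (mF m f) = blen A f" "mF m f \<in> cF B"
    "\<not> mrefl m f \<Longrightarrow> cbd B (mF m f) ! snd (cmapC A m (f, i)) = (mE m (fst (cbd A f ! i)), snd (cbd A f ! i))
       \<and> cbd B (mF m f) ! ((snd (cmapC A m (f, i)) + 1) mod blen A f)
          = (mE m (fst (cbd A f ! ((i + 1) mod blen A f))), snd (cbd A f ! ((i + 1) mod blen A f)))"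
    "mrefl m f \<Longrightarrow> cbd B (mF m f) ! snd (cmapC A m (f, i)) = (mE m (fst (cbd A f ! ((i + 1) mod blen A f))), \<not> snd (cbd A f ! ((i + 1) mod blen A f)))
       \<and> cbd B (mF m f) ! ((snd (cmapC A m (f, i)) + 1) mod blen A f)
          = (mE m (fst (cbd A f ! i)), \<not> snd (cbd A f ! i))"
proof -
  define n where "n = blen A f"
  have n: "n > 0" using blen_pos[OF wf f] n_def by simp
  have M: "\<forall>i < n. cbd B (mF m f) ! dpos (mrefl m f) (mrot m f) n i
                        = (mE m (fst (cbd A f ! i)), snd (cbd A f ! i) \<noteq> mrefl m f)"
    and k: "mrot m f < n" and bl: "blen B (mF m f) = n" and fB: "mF m f \<in> cF B"
    using m f unfolding cmorphism_def n_def by auto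
  have i': "(i + 1) mod n < n" using n by simp
  show "fst (cmapC A m (f, i)) = mF m f" unfolding cmapC_def by (simp add: Let_def)
  show "snd (cmapC A m (f, i)) < blen A f" unfolding cmapC_def Let_def using n n_def ar_lt by auto
  show "blen B (mF m f) = blen A f" using bl n_def by simp
  show "mF m f \<in> cF B" by (rule fB)
  show "\<not> mrefl m f \<Longrightarrow> cbd B (mF m f) ! snd (cmapC A m (f, i)) = (mE m (fst (cbd A f ! i)), snd (cbd A f ! i))
       \<and> cbd B (mF m f) ! ((snd (cmapC A m (f, i)) + 1) mod blen A f)
          = (mE m (fst (cbd A f ! ((i + 1) mod blen A f))), snd (cbd A f ! ((i + 1) mod blen A f)))"
  proof -
    assume r: "\<not> mrefl m f"
    have j: "snd (cmapC A m (f, i)) = dpos False (mrot m f) n i"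
      unfolding cmapC_def dpos_def Let_def n_def using r by simp
    have j1: "(snd (cmapC A m (f, i)) + 1) mod n = dpos False (mrot m f) n ((i + 1) mod n)"
      unfolding j dpos_def using ar1[OF n] by simp
    show ?thesis using M[rule_format, OF i[folded n_def]] M[rule_format, OF i'] r j j1 n_def by simp
  qed
  show "mrefl m f \<Longrightarrow> cbd B (mF m f) ! snd (cmapC A m (f, i)) = (mE m (fst (cbd A f ! ((i + 1) mod blen A f))), \<not> snd (cbd A f ! ((i + 1) mod blen A f)))
       \<and> cbd B (mF m f) ! ((snd (cmapC A m (f, i)) + 1) mod blen A f)
          = (mE m (fst (cbd A f ! i)), \<not> snd (cbd A f ! i))"
  proof -
    assume r: "mrefl m f"
    have j0: "snd (cmapC A m (f, i)) = nat ((int (mrot m f) - int i - 1) mod int n)"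
      unfolding cmapC_def Let_def n_def using r by simp
    have j: "snd (cmapC A m (f, i)) = dpos True (mrot m f) n ((i + 1) mod n)"
      unfolding j0 dpos_def using ar2[OF n] by simp
    have j1: "(snd (cmapC A m (f, i)) + 1) mod n = dpos True (mrot m f) n i"
      unfolding j0 dpos_def using ar3[OF n] by simp
    show ?thesis using M[rule_format, OF i[folded n_def]] M[rule_format, OF i'] r j j1 n_def by simp
  qed
qed

lemma corners_iff: "c \<in> corners A \<longleftrightarrow> fst c \<in> cF A \<and> snd c < blen A (fst c)"
  unfolding corners_def by (cases c) auto

lemma cm_corner_in:
  assumes m: "cmorphism A B m" and wf: "wf_cplx A" and c: "c \<in> corners A"
  shows "cmapC A m c \<in> corners B"
proof -
  obtain f i where c': "c = (f, i)" by (cases c)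
  have f: "f \<in> cF A" "i < blen A f" using c unfolding c' corners_iff by auto
  show ?thesis unfolding corners_iff c' using cm_corner[OF m wf f] by simp
qed

lemma cm_corner_vertex:
  assumes m: "cmorphism A B m" and wf: "wf_cplx A" and c: "c \<in> corners A"
  shows "corner_vertex B (cmapC A m c) = mV m (corner_vertex A c)"
proof -
  obtain f i where c': "c = (f, i)" by (cases c)
  have f: "f \<in> cF A" and i: "i < blen A f" using c unfolding c' corners_iff by auto
  have n: "blen A f > 0" using blen_pos[OF wf f] .
  have i': "(i + 1) mod blen A f < blen A f" using n by simp
  have W: "ohead A (cbd A f ! i) = otail A (cbd A f ! ((i + 1) mod blen A f))"
    using wf f i unfolding wf_cplx_def by blast
  have e1: "fst (cbd A f ! i) \<in> cE A" by (rule bd_edge[OF wf f i])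
  have e2: "fst (cbd A f ! ((i + 1) mod blen A f)) \<in> cE A" by (rule bd_edge[OF wf f i'])
  show ?thesis
  proof (cases "mrefl m f")
    case True
    have "corner_vertex B (cmapC A m c) = ohead B (mE m (fst (cbd A f ! ((i + 1) mod blen A f))), \<not> snd (cbd A f ! ((i + 1) mod blen A f)))"
      unfolding corner_vertex_def c' using cm_corner(1)[OF m wf f i] cm_corner(6)[OF m wf f i True] by simp
    also have "\<dots> = mV m (otail A (cbd A f ! ((i + 1) mod blen A f)))"
      using ohead_m[OF m e2] ohead_flip by (metis prod.collapse)
    finally show ?thesis unfolding corner_vertex_def c' using W by simp
  next
    case False
    have "corner_vertex B (cmapC A m c) = ohead B (mE m (fst (cbd A f ! i)), snd (cbd A f ! i))"
      unfolding corner_vertex_def c' using cm_corner(1)[OF m wf f i] cm_corner(5)[OF m wf f i False] by simp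
    also have "\<dots> = mV m (ohead A (cbd A f ! i))"
      using ohead_m[OF m e1] by (metis prod.collapse)
    finally show ?thesis unfolding corner_vertex_def c' by simp
  qed
qed

lemma cm_link_ends:
  assumes m: "cmorphism A B m" and wf: "wf_cplx A" and c: "c \<in> corners A"
  shows "link_ends B (cmapC A m c) = (if mrefl m (fst c)
            then (cmapEnd m (snd (link_ends A c)), cmapEnd m (fst (link_ends A c)))
            else (cmapEnd m (fst (link_ends A c)), cmapEnd m (snd (link_ends A c))))"
proof -
  obtain f i where c': "c = (f, i)" by (cases c)
  have f: "f \<in> cF A" and i: "i < blen A f" using c unfolding c' corners_iff by auto
  show ?thesis
  proof (cases "mrefl m f")
    case True
    show ?thesis using cm_corner(1,3)[OF m wf f i] cm_corner(6)[OF m wf f i True] True unfolding link_ends_def c' cmapEnd_def Let_def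
      by simp
  next
    case False
    show ?thesis using cm_corner(1,3)[OF m wf f i] cm_corner(5)[OF m wf f i False] False unfolding link_ends_def c' cmapEnd_def Let_def
      by simp
  qed
qed

lemma link_ends_in:
  assumes wf: "wf_cplx A" and c: "c \<in> link_edges A y"
  shows "fst (link_ends A c) \<in> link_verts A y" "snd (link_ends A c) \<in> link_verts A y"
proof -
  obtain f i where c': "c = (f, i)" by (cases c)
  have f: "f \<in> cF A" and i: "i < blen A f" and cv: "corner_vertex A c = y"
    using c unfolding c' link_edges_def corners_iff by auto
  have n: "blen A f > 0" using blen_pos[OF wf f] .
  have i': "(i + 1) mod blen A f < blen A f" using n by simp
  have W: "ohead A (cbd A f ! i) = otail A (cbd A f ! ((i + 1) mod blen A f))"
    using wf f i unfolding wf_cplx_def by blast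
  have e1: "fst (cbd A f ! i) \<in> cE A" by (rule bd_edge[OF wf f i])
  have e2: "fst (cbd A f ! ((i + 1) mod blen A f)) \<in> cE A" by (rule bd_edge[OF wf f i'])
  show "fst (link_ends A c) \<in> link_verts A y"
    using e1 cv unfolding link_ends_def link_verts_def c' Let_def endpt_def corner_vertex_def ohead_def
    by (simp split: if_splits)
  show "snd (link_ends A c) \<in> link_verts A y"
    using e2 cv W unfolding link_ends_def link_verts_def c' Let_def endpt_def corner_vertex_def
    by (simp add: otail_def)
qed

lemma cm_end:
  assumes m: "cmorphism A B m" and e: "fst en \<in> cE A"
  shows "fst (cmapEnd m en) \<in> cE B" "endpt B (cmapEnd m en) = mV m (endpt A en)"
  using m e unfolding cmorphism_def cmapEnd_def endpt_def by auto

lemma cm_kappa_face: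
  assumes m: "cmorphism A B m" and wf: "wf_cplx A" and f: "f \<in> cF A"
  shows "kappa_face B ang (mF m f) = kappa_face A (\<lambda>c. ang (cmapC A m c)) f"
proof -
  define n where "n = blen A f"
  have n: "n > 0" using blen_pos[OF wf f] n_def by simp
  have k: "mrot m f < n" using m f unfolding cmorphism_def n_def by auto
  define h where "h i = snd (cmapC A m (f, i))" for i
  have hlt: "h ` {..<n} \<subseteq> {..<n}" using cm_corner(2)[OF m wf f] unfolding h_def n_def by auto
  have hinj: "inj_on h {..<n}"
  proof
    fix i i' assume i: "i \<in> {..<n}" and i': "i' \<in> {..<n}" and e: "h i = h i'"
    show "i = i'"
    proof (cases "mrefl m f")
      case True
      hence "nat ((int (mrot m f) - int i - 1) mod int n) = nat ((int (mrot m f) - int i' - 1) mod int n)"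
        using e unfolding h_def cmapC_def Let_def n_def by simp
      moreover have "\<And>x. x mod int n \<ge> 0" using n by simp
      ultimately have "(int (mrot m f) - int i - 1) mod int n = (int (mrot m f) - int i' - 1) mod int n"
        using eq_nat_nat_iff by blast
      moreover have "\<bar>(int (mrot m f) - int i - 1) - (int (mrot m f) - int i' - 1)\<bar> < int n"
        using i i' by (simp add: abs_if)
      ultimately have "int (mrot m f) - int i - 1 = int (mrot m f) - int i' - 1"
        by (rule mod_inj_int)
      thus ?thesis by simp
    next
      case False
      hence "int ((mrot m f + i) mod n) = int ((mrot m f + i') mod n)"
        using e unfolding h_def cmapC_def Let_def n_def by simp
      hence "(int (mrot m f) + int i) mod int n = (int (mrot m f) + int i') mod int n"
        by (simp add: of_nat_mod)
      moreover have "\<bar>(int (mrot m f) + int i) - (int (mrot m f) + int i')\<bar> < int n"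
        using i i' by (simp add: abs_if)
      ultimately have "int (mrot m f) + int i = int (mrot m f) + int i'"
        by (rule mod_inj_int)
      thus ?thesis by simp
    qed
  qed
  have hbij: "bij_betw h {..<n} {..<n}"
    unfolding bij_betw_def using hinj endo_inj_surj[OF _ hlt hinj] by simp
  have "(\<Sum>i<n. ang (cmapC A m (f, i))) = (\<Sum>i<n. ang (mF m f, h i))"
    unfolding h_def cmapC_def by (simp add: Let_def)
  also have "\<dots> = (\<Sum>j<n. ang (mF m f, j))"
    by (rule sum.reindex_bij_betw[OF hbij, where g="\<lambda>j. ang (mF m f, j)"])
  finally show ?thesis
    unfolding kappa_face_def using cm_corner(3)[OF m wf f] n n_def by (simp add: n_def)
qed




definition cact :: "'g monoid \<Rightarrow> 'g set \<Rightarrow> ('g \<Rightarrow> ('v,'e,'f,'v,'e,'f) cmorph) \<Rightarrow> ('v,'e,'f) cplx \<Rightarrow> bool" where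
  "cact G K act X \<longleftrightarrow> group G \<and> subgroup K G \<and> wf_cplx X \<and>
     (\<forall>g\<in>K. cmorphism X X (act g)) \<and>
     (\<forall>v\<in>cV X. mV (act \<one>\<^bsub>G\<^esub>) v = v) \<and> (\<forall>e\<in>cE X. mE (act \<one>\<^bsub>G\<^esub>) e = e) \<and>
     (\<forall>f\<in>cF X. mF (act \<one>\<^bsub>G\<^esub>) f = f) \<and> (\<forall>c\<in>corners X. cmapC X (act \<one>\<^bsub>G\<^esub>) c = c) \<and>
     (\<forall>g\<in>K. \<forall>h\<in>K.
        (\<forall>v\<in>cV X. mV (act (g \<otimes>\<^bsub>G\<^esub> h)) v = mV (act g) (mV (act h) v)) \<and>
        (\<forall>e\<in>cE X. mE (act (g \<otimes>\<^bsub>G\<^esub> h)) e = mE (act g) (mE (act h) e)) \<and>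
        (\<forall>f\<in>cF X. mF (act (g \<otimes>\<^bsub>G\<^esub> h)) f = mF (act g) (mF (act h) f)) \<and>
        (\<forall>c\<in>corners X. cmapC X (act (g \<otimes>\<^bsub>G\<^esub> h)) c = cmapC X (act g) (cmapC X (act h) c)))"

lemma cact_G: "group_cact G act X \<Longrightarrow> cact G (carrier G) act X"
  unfolding group_cact_def cact_def using group.subgroup_self by blast

lemma cact_H:
  assumes "group G" "subgroup H G" "group_cact (G\<lparr>carrier := H\<rparr>) act Y"
  shows "cact G H act Y"
  using assms unfolding group_cact_def cact_def by simp

definition Ends :: "('v,'e,'f) cplx \<Rightarrow> ('e \<times> bool) set" where
  "Ends X = {en. fst en \<in> cE X}"

lemma link_verts_fiber: "link_verts X y = {s \<in> Ends X. endpt X s = y}"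
  unfolding link_verts_def Ends_def by auto
lemma link_edges_fiber: "link_edges X y = {c \<in> corners X. corner_vertex X c = y}"
  unfolding link_edges_def by auto

context
  fixes G K act X
  assumes C: "cact G K act X"
begin

lemma c_grp: "group G" using C unfolding cact_def by blast
lemma c_sg: "subgroup K G" using C unfolding cact_def by blast
lemma c_wf: "wf_cplx X" using C unfolding cact_def by blast
lemma c_m: "g \<in> K \<Longrightarrow> cmorphism X X (act g)" using C unfolding cact_def by blast

lemma ax_V: "act_ax G K (actV act) (cV X)"
  using C unfolding cact_def act_ax_def actV_def cmorphism_def by blast
lemma ax_E: "act_ax G K (actE act) (cE X)"
  using C unfolding cact_def act_ax_def actE_def cmorphism_def by blast
lemma ax_F: "act_ax G K (actF act) (cF X)"
  using C unfolding cact_def act_ax_def actF_def cmorphism_def by blast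
lemma ax_Ends: "act_ax G K (actEnd act) (Ends X)"
  using C unfolding cact_def act_ax_def actEnd_def cmorphism_def Ends_def cmapEnd_def by auto
lemma ax_C: "act_ax G K (actC X act) (corners X)"
proof -
  have "\<forall>g\<in>K. \<forall>c\<in>corners X. actC X act g c \<in> corners X"
    unfolding actC_def using cm_corner_in[OF c_m c_wf] by blast
  thus ?thesis using C unfolding cact_def act_ax_def actC_def by blast
qed

lemma eq_endpt: "g \<in> K \<Longrightarrow> s \<in> Ends X \<Longrightarrow> endpt X (actEnd act g s) = actV act g (endpt X s)"
  unfolding actEnd_def actV_def Ends_def using cm_end[OF c_m] by blast
lemma eq_fstEnd: "g \<in> K \<Longrightarrow> s \<in> Ends X \<Longrightarrow> fst (actEnd act g s) = actE act g (fst s)"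
  unfolding actEnd_def actE_def cmapEnd_def by simp
lemma eq_cv: "g \<in> K \<Longrightarrow> c \<in> corners X \<Longrightarrow> corner_vertex X (actC X act g c) = actV act g (corner_vertex X c)"
  unfolding actC_def actV_def using cm_corner_vertex[OF c_m c_wf] by blast
lemma eq_fstC: "g \<in> K \<Longrightarrow> c \<in> corners X \<Longrightarrow> fst (actC X act g c) = actF act g (fst c)"
  unfolding actC_def actF_def cmapC_def by (simp add: Let_def)

lemma ends_orbs_finite:
  assumes fE: "finite (orbs K (actE act) (cE X))"
  shows "finite (orbs K (actEnd act) (Ends X))"
proof -
  have "orbs K (actEnd act) (Ends X) \<subseteq> (\<lambda>(Q, b). orb K (actEnd act) (rep Q, b)) ` (orbs K (actE act) (cE X) \<times> UNIV)"
  proof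
    fix z assume "z \<in> orbs K (actEnd act) (Ends X)"
    then obtain e b where eb: "(e, b) \<in> Ends X" "z = orb K (actEnd act) (e, b)" unfolding orbs_def by auto
    have e: "e \<in> cE X" using eb unfolding Ends_def by simp
    define Q where "Q = orb K (actE act) e"
    have Q: "Q \<in> orbs K (actE act) (cE X)" unfolding Q_def orbs_def using e by blast
    have "rep Q \<in> Q" using rep_in[OF ax_E Q] .
    then obtain g where g: "g \<in> K" "rep Q = actE act g e" unfolding Q_def orb_def by blast
    have "(rep Q, b) = actEnd act g (e, b)" using g unfolding actEnd_def actE_def cmapEnd_def by simp
    hence "(rep Q, b) \<in> orb K (actEnd act) (e, b)" unfolding orb_def using g by blast
    hence "z = orb K (actEnd act) (rep Q, b)" using orb_eq[OF ax_Ends eb(1)] eb(2) by simp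
    thus "z \<in> (\<lambda>(Q, b). orb K (actEnd act) (rep Q, b)) ` (orbs K (actE act) (cE X) \<times> UNIV)"
      using Q by force
  qed
  moreover have "finite ((\<lambda>(Q, b). orb K (actEnd act) (rep Q, b)) ` (orbs K (actE act) (cE X) \<times> (UNIV::bool set)))"
    using fE by simp
  ultimately show ?thesis by (rule finite_subset)
qed

lemma corners_orbs_finite:
  assumes fF: "finite (orbs K (actF act) (cF X))"
  shows "finite (orbs K (actC X act) (corners X))"
proof -
  have "orbs K (actC X act) (corners X) \<subseteq> (\<Union>Q\<in>orbs K (actF act) (cF X). (\<lambda>i. orb K (actC X act) (rep Q, i)) ` {..<blen X (rep Q)})"
  proof
    fix z assume "z \<in> orbs K (actC X act) (corners X)"
    then obtain c where c: "c \<in> corners X" "z = orb K (actC X act) c" unfolding orbs_def by auto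
    have f: "fst c \<in> cF X" using c corners_iff by blast
    define Q where "Q = orb K (actF act) (fst c)"
    have Q: "Q \<in> orbs K (actF act) (cF X)" unfolding Q_def orbs_def using f by blast
    have "rep Q \<in> Q" using rep_in[OF ax_F Q] .
    then obtain g where g: "g \<in> K" "rep Q = actF act g (fst c)" unfolding Q_def orb_def by blast
    define c' where "c' = actC X act g c"
    have c'C: "c' \<in> corners X" unfolding c'_def using cl[OF ax_C g(1) c(1)] .
    have fc': "fst c' = rep Q" unfolding c'_def using eq_fstC[OF g(1) c(1)] g by simp
    have "c' \<in> orb K (actC X act) c" unfolding orb_def c'_def using g by blast
    hence "z = orb K (actC X act) c'" using orb_eq[OF ax_C c(1)] c(2) by simp
    moreover have "c' = (rep Q, snd c')" using fc' by (cases c') auto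
    moreover have "snd c' < blen X (rep Q)" using c'C fc' corners_iff by metis
    ultimately show "z \<in> (\<Union>Q\<in>orbs K (actF act) (cF X). (\<lambda>i. orb K (actC X act) (rep Q, i)) ` {..<blen X (rep Q)})"
      using Q by (metis (no_types, lifting) UN_iff imageI lessThan_iff)
  qed
  moreover have "finite (\<Union>Q\<in>orbs K (actF act) (cF X). (\<lambda>i. orb K (actC X act) (rep Q, i)) ` {..<blen X (rep Q)})"
    using fF by simp
  ultimately show ?thesis by (rule finite_subset)
qed

end

lemma fiber_bound:
  assumes A: "act_ax G K a S" and B: "act_ax G K b V"
    and pV: "\<forall>s\<in>S. p s \<in> V" and peq: "\<forall>g\<in>K. \<forall>s\<in>S. p (a g s) = b g (p s)"
    and fS: "finite (orbs K a S)" and fst: "\<forall>v\<in>V. finite (stab K b v)"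
  shows "\<exists>L. \<forall>x\<in>V. finite {s\<in>S. p s = x} \<and> card {s\<in>S. p s = x} \<le> L"
proof -
  define R where "R = rep ` orbs K a S"
  have fR: "finite R" unfolding R_def using fS by simp
  have RS: "R \<subseteq> S" unfolding R_def using rep_S[OF A] by blast
  define L where "L = (\<Sum>r\<in>R. card (stab K b (p r)))"
  have "finite {s\<in>S. p s = x} \<and> card {s\<in>S. p s = x} \<le> L" if x: "x \<in> V" for x
  proof -
    define T where "T r = {s \<in> orb K a r. p s = x}" for r
    have sub: "{s\<in>S. p s = x} \<subseteq> (\<Union>r\<in>R. T r)"
    proof
      fix s assume s: "s \<in> {s\<in>S. p s = x}"
      define Q where "Q = orb K a s"
      have Q: "Q \<in> orbs K a S" unfolding Q_def orbs_def using s by blast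
      have "s \<in> orb K a (rep Q)" using orb_rep[OF A Q] orb_self[OF A] s unfolding Q_def by auto
      thus "s \<in> (\<Union>r\<in>R. T r)" unfolding T_def R_def using Q s by blast
    qed
    have Tb: "finite (T r) \<and> card (T r) \<le> card (stab K b (p r))" if r: "r \<in> R" for r
    proof (cases "T r = {}")
      case True thus ?thesis by simp
    next
      case False
      have rS: "r \<in> S" using r RS by blast
      obtain s0 where "s0 \<in> T r" using False by blast
      then obtain g0 where g0: "g0 \<in> K" "p (a g0 r) = x" unfolding T_def orb_def by blast
      have fs: "finite (stab K b (p r))" using fst pV rS by blast
      have "T r \<subseteq> (\<lambda>k. a (g0 \<otimes>\<^bsub>G\<^esub> k) r) ` stab K b (p r)"
      proof
        fix s assume "s \<in> T r"
        then obtain g where g: "g \<in> K" "s = a g r" "p s = x" unfolding T_def orb_def by blast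
        define k where "k = inv\<^bsub>G\<^esub> g0 \<otimes>\<^bsub>G\<^esub> g"
        have kK: "k \<in> K" unfolding k_def using mK[OF A invK[OF A g0(1)] g(1)] .
        have prV: "p r \<in> V" using pV rS by blast
        have bg: "b g (p r) = x" using g peq rS by auto
        have bg0: "b g0 (p r) = x" using g0 peq rS by auto
        have "b k (p r) = b (inv\<^bsub>G\<^esub> g0) (b g (p r))" unfolding k_def
          using comp[OF B invK[OF A g0(1)] g(1) prV] .
        also have "\<dots> = p r" using bg bg0 inv_act[OF B g0(1) prV] by simp
        finally have "k \<in> stab K b (p r)" unfolding stab_def using kK by blast
        moreover have "g0 \<otimes>\<^bsub>G\<^esub> k = g"
        proof -
          interpret group G by (rule grp[OF A])
          show ?thesis unfolding k_def using Kc[OF A g0(1)] Kc[OF A g(1)]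
            by (simp add: m_assoc[symmetric])
        qed
        ultimately show "s \<in> (\<lambda>k. a (g0 \<otimes>\<^bsub>G\<^esub> k) r) ` stab K b (p r)" using g by force
      qed
      thus ?thesis using fs by (meson card_image_le finite_imageI finite_subset le_trans card_mono)
    qed
    have fU: "finite (\<Union>r\<in>R. T r)" using fR Tb by blast
    have "card (\<Union>r\<in>R. T r) \<le> (\<Sum>r\<in>R. card (T r))" by (rule card_UN_le[OF fR])
    also have "\<dots> \<le> L" unfolding L_def using Tb by (intro sum_mono) auto
    finally show ?thesis using sub fU by (meson card_mono finite_subset le_trans)
  qed
  thus ?thesis by blast
qed

lemma stab_bound:
  assumes B: "act_ax G K b V" and fV: "finite (orbs K b V)" and fst: "\<forall>v\<in>V. finite (stab K b v)"
  shows "\<exists>L. \<forall>x\<in>V. card (stab K b x) \<le> L"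
proof -
  define R where "R = rep ` orbs K b V"
  have fR: "finite R" unfolding R_def using fV by simp
  define L where "L = (\<Sum>r\<in>R. card (stab K b r))"
  have "card (stab K b x) \<le> L" if x: "x \<in> V" for x
  proof -
    define Q where "Q = orb K b x"
    have Q: "Q \<in> orbs K b V" unfolding Q_def orbs_def using x by blast
    have rV: "rep Q \<in> V" using rep_S[OF B Q] .
    have "x \<in> orb K b (rep Q)" using orb_rep[OF B Q] orb_self[OF B x] unfolding Q_def by auto
    then obtain g where g: "g \<in> K" "x = b g (rep Q)" unfolding orb_def by blast
    have "card (stab K b x) = card (stab K b (rep Q))"
      using stab_conj[OF B g(1) rV] g(2) bij_betw_same_card by metis
    also have "\<dots> \<le> L" unfolding L_def using fR Q R_def by (intro member_le_sum) auto
    finally show ?thesis .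
  qed
  thus ?thesis by blast
qed




lemma fiber_ax:
  assumes A: "act_ax G K a S" and B: "act_ax G K b V"
    and peq: "\<forall>g\<in>K. \<forall>s\<in>S. p (a g s) = b g (p s)" and y: "y \<in> V"
  shows "act_ax G (stab K b y) a {s\<in>S. p s = y}"
proof (rule act_ax_restrict[OF A stab_subgroup[OF B y]])
  show "stab K b y \<subseteq> K" unfolding stab_def by auto
  show "{s \<in> S. p s = y} \<subseteq> S" by auto
  show "\<forall>g\<in>stab K b y. \<forall>x\<in>{s \<in> S. p s = y}. a g x \<in> {s \<in> S. p s = y}"
    unfolding stab_def using peq cl[OF A] by auto
qed

lemma endpt_V: "wf_cplx X \<Longrightarrow> s \<in> Ends X \<Longrightarrow> endpt X s \<in> cV X"
  unfolding wf_cplx_def Ends_def endpt_def by auto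

lemma cv_V: "wf_cplx X \<Longrightarrow> c \<in> corners X \<Longrightarrow> corner_vertex X c \<in> cV X"
proof -
  assume wf: "wf_cplx X" and c: "c \<in> corners X"
  have "fst (cbd X (fst c) ! snd c) \<in> cE X" using bd_edge[OF wf] c corners_iff by blast
  thus ?thesis using wf unfolding corner_vertex_def ohead_def wf_cplx_def by auto
qed


definition sums_set :: "nat \<Rightarrow> real set \<Rightarrow> real set" where
  "sums_set M T = {s. \<exists>m t. m \<le> M \<and> (\<forall>i<m. t i \<in> T) \<and> s = (\<Sum>i<m. t i)}"

lemma sums_set_finite: "finite T \<Longrightarrow> finite (sums_set M T)"
proof -
  assume fT: "finite T"
  have "sums_set M T \<subseteq> (\<Union>m\<in>{..M}. (\<lambda>t. \<Sum>i<m. t i) ` (PiE {..<m} (\<lambda>_. T)))"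
  proof
    fix s assume "s \<in> sums_set M T"
    then obtain m t where mt: "m \<le> M" "\<forall>i<m. t i \<in> T" "s = (\<Sum>i<m. t i)" unfolding sums_set_def by blast
    have "restrict t {..<m} \<in> PiE {..<m} (\<lambda>_. T)" using mt(2) by auto
    moreover have "s = (\<Sum>i<m. restrict t {..<m} i)" using mt(3) by simp
    ultimately show "s \<in> (\<Union>m\<in>{..M}. (\<lambda>t. \<Sum>i<m. t i) ` (PiE {..<m} (\<lambda>_. T)))" using mt(1) by blast
  qed
  moreover have "finite (\<Union>m\<in>{..M}. (\<lambda>t. \<Sum>i<m. t i) ` (PiE {..<m} (\<lambda>_. T)))"
    using fT by (intro finite_UN_I finite_imageI finite_PiE) auto
  ultimately show ?thesis by (rule finite_subset)
qed

lemma sum_in_sums_set: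
  assumes fA: "finite A" and cA: "card A \<le> M" and h: "\<forall>a\<in>A. h a \<in> T"
  shows "(\<Sum>a\<in>A. h a) \<in> sums_set M T"
proof -
  obtain g where g: "bij_betw g {0..<card A} A" using ex_bij_betw_nat_finite[OF fA] by blast
  have "(\<Sum>a\<in>A. h a) = (\<Sum>i\<in>{0..<card A}. h (g i))"
    using sum.reindex_bij_betw[OF g, of h] by simp
  also have "\<dots> = (\<Sum>i<card A. h (g i))" by (simp add: atLeast0LessThan)
  finally have e: "(\<Sum>a\<in>A. h a) = (\<Sum>i<card A. h (g i))" .
  have "\<forall>i<card A. h (g i) \<in> T" using g h unfolding bij_betw_def by auto
  hence "m \<le> M \<and> (\<forall>i<m. t i \<in> T) \<and> (\<Sum>a\<in>A. h a) = (\<Sum>i<m. t i)" if "m = card A" "t = (\<lambda>i. h (g i))" for m t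
    using that e cA by simp
  thus ?thesis unfolding sums_set_def by blast
qed

lemma invc_fin: "finite A \<Longrightarrow> invc A = 1 / real (card A)" unfolding invc_def by simp

lemma invc_nonneg: "invc A \<ge> 0" unfolding invc_def by simp

context
  fixes G :: "'g monoid"
    and X :: "('v,'e,'f) cplx" and act :: "'g \<Rightarrow> ('v,'e,'f,'v,'e,'f) cmorph"
    and ang :: "'f \<times> nat \<Rightarrow> real"
    and H :: "'g set"
    and Y :: "('w,'d,'h) cplx" and actY :: "'g \<Rightarrow> ('w,'d,'h,'w,'d,'h) cmorph"
    and phi :: "('w,'d,'h,'v,'e,'f) cmorph"
  assumes a1: "group_cact G act X"
    and a2: "\<forall>g\<in>carrier G. \<forall>c\<in>corners X. ang (cmapC X (act g) c) = ang c"
    and a3: "proper_act (carrier G) X act"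
    and a4: "cocompact_act (carrier G) X act"
    and a5: "\<forall>f\<in>cF X. kappa_face X ang f \<le> 0"
    and a6: "subgroup H G"
    and a7: "group_cact (G\<lparr>carrier := H\<rparr>) actY Y"
    and a8: "cocompact_act H Y actY"
    and a9: "immersion Y X phi"
    and a10: "equivariant H Y X actY act phi"
begin

lemma CX: "cact G (carrier G) act X" using cact_G[OF a1] .
lemma grpG: "group G" using a1 unfolding group_cact_def by blast
lemma CY: "cact G H actY Y" using cact_H[OF grpG a6 a7] .
lemma mphi: "cmorphism Y X phi" using a9 unfolding immersion_def by blast
lemma wfY: "wf_cplx Y" using c_wf[OF CY] .
lemma wfX: "wf_cplx X" using c_wf[OF CX] .
lemma HG: "h \<in> H \<Longrightarrow> h \<in> carrier G" using subgroup.subset[OF a6] by blast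

lemma eqV: "h \<in> H \<Longrightarrow> y \<in> cV Y \<Longrightarrow> mV phi (actV actY h y) = actV act h (mV phi y)"
  using a10 unfolding equivariant_def actV_def by blast
lemma eqE: "h \<in> H \<Longrightarrow> e \<in> cE Y \<Longrightarrow> mE phi (actE actY h e) = actE act h (mE phi e)"
  using a10 unfolding equivariant_def actE_def by blast
lemma eqF: "h \<in> H \<Longrightarrow> f \<in> cF Y \<Longrightarrow> mF phi (actF actY h f) = actF act h (mF phi f)"
  using a10 unfolding equivariant_def actF_def by blast
lemma eqC: "h \<in> H \<Longrightarrow> c \<in> corners Y \<Longrightarrow> cmapC Y phi (actC Y actY h c) = actC X act h (cmapC Y phi c)"
  using a10 unfolding equivariant_def actC_def by blast
lemma eqEnd: "h \<in> H \<Longrightarrow> s \<in> Ends Y \<Longrightarrow> cmapEnd phi (actEnd actY h s) = actEnd act h (cmapEnd phi s)"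
  using eqE unfolding actEnd_def cmapEnd_def Ends_def actE_def by auto

lemma phiV: "y \<in> cV Y \<Longrightarrow> mV phi y \<in> cV X" using mphi unfolding cmorphism_def by blast
lemma phiE: "e \<in> cE Y \<Longrightarrow> mE phi e \<in> cE X" using mphi unfolding cmorphism_def by blast
lemma phiF: "f \<in> cF Y \<Longrightarrow> mF phi f \<in> cF X" using mphi unfolding cmorphism_def by blast

lemma stabY_V: "y \<in> cV Y \<Longrightarrow> stab H (actV actY) y \<subseteq> stab (carrier G) (actV act) (mV phi y)"
  unfolding stab_def using eqV HG by auto (metis)
lemma stabY_E: "e \<in> cE Y \<Longrightarrow> stab H (actE actY) e \<subseteq> stab (carrier G) (actE act) (mE phi e)"
  unfolding stab_def using eqE HG by auto (metis)
lemma stabY_F: "f \<in> cF Y \<Longrightarrow> stab H (actF actY) f \<subseteq> stab (carrier G) (actF act) (mF phi f)"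
  unfolding stab_def using eqF HG by auto (metis)

lemma finstabX_V: "x \<in> cV X \<Longrightarrow> finite (stab (carrier G) (actV act) x)"
  using a3 unfolding proper_act_def by blast
lemma finstabY_V: "y \<in> cV Y \<Longrightarrow> finite (stab H (actV actY) y)"
  using stabY_V finstabX_V phiV finite_subset by metis
lemma finstabY_E: "e \<in> cE Y \<Longrightarrow> finite (stab H (actE actY) e)"
  using stabY_E phiE a3 finite_subset unfolding proper_act_def by metis
lemma finstabY_F: "f \<in> cF Y \<Longrightarrow> finite (stab H (actF actY) f)"
  using stabY_F phiF a3 finite_subset unfolding proper_act_def by metis

abbreviation "angY \<equiv> (\<lambda>c. ang (cmapC Y phi c))"

lemma angY_inv: "finv H (actC Y actY) (corners Y) (\<lambda>c. pi - angY c)"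
  unfolding finv_def
proof (intro ballI)
  fix h c assume h: "h \<in> H" and c: "c \<in> corners Y"
  have "cmapC Y phi c \<in> corners X" using cm_corner_in[OF mphi wfY c] .
  thus "pi - angY (actC Y actY h c) = pi - angY c"
    using eqC[OF h c] a2 HG[OF h] unfolding actC_def by simp
qed

lemma finOV: "finite (orbs H (actV actY) (cV Y))" using a8 unfolding cocompact_act_def by blast
lemma finOE: "finite (orbs H (actE actY) (cE Y))" using a8 unfolding cocompact_act_def by blast
lemma finOF: "finite (orbs H (actF actY) (cF Y))" using a8 unfolding cocompact_act_def by blast
lemma finOEnd: "finite (orbs H (actEnd actY) (Ends Y))" using ends_orbs_finite[OF CY finOE] .
lemma finOC: "finite (orbs H (actC Y actY) (corners Y))" using corners_orbs_finite[OF CY finOF] .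

lemma ends_term:
  "(\<Sum>v\<in>orbs H (actV actY) (cV Y). wsum (stab H (actV actY) (rep v)) (actEnd actY) (link_verts Y (rep v)) (\<lambda>_. pi))
    = 2 * pi * (\<Sum>Ob\<in>orbs H (actE actY) (cE Y). invc (stab H (actE actY) (rep Ob)))"
proof -
  have "(\<Sum>v\<in>orbs H (actV actY) (cV Y). wsum (stab H (actV actY) (rep v)) (actEnd actY) (link_verts Y (rep v)) (\<lambda>_. pi))
      = wsum H (actEnd actY) (Ends Y) (\<lambda>_. pi)"
    unfolding link_verts_fiber
    using fibration[OF ax_Ends[OF CY] ax_V[OF CY] _ _ finOEnd finOV, of "endpt Y" "\<lambda>_. pi"]
      endpt_V[OF wfY] eq_endpt[OF CY] by (simp add: finv_def)
  also have "\<dots> = (\<Sum>Ob\<in>orbs H (actE actY) (cE Y). wsum (stab H (actE actY) (rep Ob)) (actEnd actY) {s\<in>Ends Y. fst s = rep Ob} (\<lambda>_. pi))"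
    using fibration[OF ax_Ends[OF CY] ax_E[OF CY] _ _ finOEnd finOE, of fst "\<lambda>_. pi"]
      eq_fstEnd[OF CY] by (simp add: finv_def Ends_def)
  also have "\<dots> = (\<Sum>Ob\<in>orbs H (actE actY) (cE Y). 2 * pi * invc (stab H (actE actY) (rep Ob)))"
  proof (rule sum.cong[OF refl])
    fix Ob assume Ob: "Ob \<in> orbs H (actE actY) (cE Y)"
    define e where "e = rep Ob"
    have e: "e \<in> cE Y" using rep_S[OF ax_E[OF CY] Ob] e_def by simp
    have fib: "{s\<in>Ends Y. fst s = e} = {(e, True), (e, False)}" unfolding Ends_def using e by auto
    have ax: "act_ax G (stab H (actE actY) e) (actEnd actY) {s\<in>Ends Y. fst s = e}"
      by (rule fiber_ax[OF ax_Ends[OF CY] ax_E[OF CY] _ e]) (auto simp: eq_fstEnd[OF CY])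
    have "wsum (stab H (actE actY) e) (actEnd actY) {s\<in>Ends Y. fst s = e} (\<lambda>_. pi)
        = (\<Sum>s\<in>{s\<in>Ends Y. fst s = e}. pi) / real (card (stab H (actE actY) e))"
      by (rule wsum_finite_group[OF ax finstabY_E[OF e]]) (auto simp: fib finv_def)
    also have "\<dots> = 2 * pi * invc (stab H (actE actY) e)"
      unfolding fib using invc_fin[OF finstabY_E[OF e]] by simp
    finally show "wsum (stab H (actE actY) (rep Ob)) (actEnd actY) {s\<in>Ends Y. fst s = rep Ob} (\<lambda>_. pi)
        = 2 * pi * invc (stab H (actE actY) (rep Ob))" using e_def by simp
  qed
  finally show ?thesis by (simp add: sum_distrib_left)
qed

lemma corners_term:
  "(\<Sum>v\<in>orbs H (actV actY) (cV Y). wsum (stab H (actV actY) (rep v)) (actC Y actY) (link_edges Y (rep v)) (\<lambda>c. pi - angY c))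
    = (\<Sum>Ob\<in>orbs H (actF actY) (cF Y). (2 * pi - kappa_face X ang (mF phi (rep Ob))) * invc (stab H (actF actY) (rep Ob)))"
proof -
  have "(\<Sum>v\<in>orbs H (actV actY) (cV Y). wsum (stab H (actV actY) (rep v)) (actC Y actY) (link_edges Y (rep v)) (\<lambda>c. pi - angY c))
      = wsum H (actC Y actY) (corners Y) (\<lambda>c. pi - angY c)"
    unfolding link_edges_fiber
    using fibration[OF ax_C[OF CY] ax_V[OF CY] _ _ finOC finOV angY_inv, of "corner_vertex Y"]
      cv_V[OF wfY] eq_cv[OF CY] by simp
  also have "\<dots> = (\<Sum>Ob\<in>orbs H (actF actY) (cF Y). wsum (stab H (actF actY) (rep Ob)) (actC Y actY) {c\<in>corners Y. fst c = rep Ob} (\<lambda>c. pi - angY c))"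
  proof -
    have cf: "\<forall>s\<in>corners Y. fst s \<in> cF Y" using corners_iff by blast
    have ce: "\<forall>g\<in>H. \<forall>c\<in>corners Y. fst (actC Y actY g c) = actF actY g (fst c)"
      using eq_fstC[OF CY] by blast
    show ?thesis using fibration[OF ax_C[OF CY] ax_F[OF CY] cf ce finOC finOF angY_inv] by simp
  qed
  also have "\<dots> = (\<Sum>Ob\<in>orbs H (actF actY) (cF Y). (2 * pi - kappa_face X ang (mF phi (rep Ob))) * invc (stab H (actF actY) (rep Ob)))"
  proof (rule sum.cong[OF refl])
    fix Ob assume Ob: "Ob \<in> orbs H (actF actY) (cF Y)"
    define f where "f = rep Ob"
    have f: "f \<in> cF Y" using rep_S[OF ax_F[OF CY] Ob] f_def by simp
    have fib: "{c\<in>corners Y. fst c = f} = (\<lambda>i. (f, i)) ` {..<blen Y f}"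
      using f unfolding corners_def by auto
    have ax: "act_ax G (stab H (actF actY) f) (actC Y actY) {c\<in>corners Y. fst c = f}"
      by (rule fiber_ax[OF ax_C[OF CY] ax_F[OF CY] _ f]) (auto simp: eq_fstC[OF CY])
    have inv: "finv (stab H (actF actY) f) (actC Y actY) {c\<in>corners Y. fst c = f} (\<lambda>c. pi - angY c)"
      using angY_inv unfolding finv_def stab_def by auto
    have "wsum (stab H (actF actY) f) (actC Y actY) {c\<in>corners Y. fst c = f} (\<lambda>c. pi - angY c)
        = (\<Sum>c\<in>{c\<in>corners Y. fst c = f}. pi - angY c) / real (card (stab H (actF actY) f))"
      by (rule wsum_finite_group[OF ax finstabY_F[OF f] _ inv]) (simp add: fib)
    also have "(\<Sum>c\<in>{c\<in>corners Y. fst c = f}. pi - angY c) = (\<Sum>i<blen Y f. pi - angY (f, i))"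
      unfolding fib by (subst sum.reindex) (auto simp: inj_on_def)
    also have "\<dots> = 2 * pi - kappa_face Y angY f"
      unfolding kappa_face_def by (simp add: sum_subtractf algebra_simps)
    also have "kappa_face Y angY f = kappa_face X ang (mF phi f)"
      using cm_kappa_face[OF mphi wfY f] by simp
    finally show "wsum (stab H (actF actY) (rep Ob)) (actC Y actY) {c\<in>corners Y. fst c = rep Ob} (\<lambda>c. pi - angY c)
        = (2 * pi - kappa_face X ang (mF phi (rep Ob))) * invc (stab H (actF actY) (rep Ob))"
      using f_def invc_fin[OF finstabY_F[OF f]] by simp
  qed
  finally show ?thesis .
qed

lemma gauss_bonnet:
  "2 * pi * euler_char H Y actY \<le> (\<Sum>v\<in>orbs H (actV actY) (cV Y). kappa_vertex H Y actY angY v)"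
proof -
  have "(\<Sum>v\<in>orbs H (actV actY) (cV Y). kappa_vertex H Y actY angY v)
     = (\<Sum>v\<in>orbs H (actV actY) (cV Y). 2 * pi * invc (stab H (actV actY) (rep v)))
       - (\<Sum>v\<in>orbs H (actV actY) (cV Y). wsum (stab H (actV actY) (rep v)) (actEnd actY) (link_verts Y (rep v)) (\<lambda>_. pi))
       + (\<Sum>v\<in>orbs H (actV actY) (cV Y). wsum (stab H (actV actY) (rep v)) (actC Y actY) (link_edges Y (rep v)) (\<lambda>c. pi - angY c))"
    unfolding kappa_vertex_def Let_def kappa_graph_wsum by (simp add: sum.distrib sum_subtractf)
  also have "\<dots> = 2 * pi * (\<Sum>v\<in>orbs H (actV actY) (cV Y). invc (stab H (actV actY) (rep v)))
       - 2 * pi * (\<Sum>Ob\<in>orbs H (actE actY) (cE Y). invc (stab H (actE actY) (rep Ob)))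
       + (\<Sum>Ob\<in>orbs H (actF actY) (cF Y). (2 * pi - kappa_face X ang (mF phi (rep Ob))) * invc (stab H (actF actY) (rep Ob)))"
    unfolding ends_term corners_term by (simp add: sum_distrib_left)
  also have "(\<Sum>Ob\<in>orbs H (actF actY) (cF Y). (2 * pi - kappa_face X ang (mF phi (rep Ob))) * invc (stab H (actF actY) (rep Ob)))
      \<ge> (\<Sum>Ob\<in>orbs H (actF actY) (cF Y). 2 * pi * invc (stab H (actF actY) (rep Ob)))"
  proof (rule sum_mono)
    fix Ob assume Ob: "Ob \<in> orbs H (actF actY) (cF Y)"
    have f: "rep Ob \<in> cF Y" using rep_S[OF ax_F[OF CY] Ob] .
    have "kappa_face X ang (mF phi (rep Ob)) \<le> 0" using a5 phiF[OF f] by blast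
    thus "2 * pi * invc (stab H (actF actY) (rep Ob)) \<le> (2 * pi - kappa_face X ang (mF phi (rep Ob))) * invc (stab H (actF actY) (rep Ob))"
      using invc_nonneg by (intro mult_right_mono) auto
  qed
  ultimately show ?thesis unfolding euler_char_def by (simp add: sum_distrib_left algebra_simps)
qed

lemma finOVX: "finite (orbs (carrier G) (actV act) (cV X))" using a4 unfolding cocompact_act_def by blast
lemma finOEX: "finite (orbs (carrier G) (actE act) (cE X))" using a4 unfolding cocompact_act_def by blast
lemma finOFX: "finite (orbs (carrier G) (actF act) (cF X))" using a4 unfolding cocompact_act_def by blast
lemma finOEndX: "finite (orbs (carrier G) (actEnd act) (Ends X))" using ends_orbs_finite[OF CX finOEX] .
lemma finOCX: "finite (orbs (carrier G) (actC X act) (corners X))" using corners_orbs_finite[OF CX finOFX] .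

lemma lv_bound: "\<exists>L. \<forall>x\<in>cV X. finite (link_verts X x) \<and> card (link_verts X x) \<le> L"
proof -
  have p1: "\<forall>s\<in>Ends X. endpt X s \<in> cV X" using endpt_V[OF wfX] by blast
  have p2: "\<forall>g\<in>carrier G. \<forall>s\<in>Ends X. endpt X (actEnd act g s) = actV act g (endpt X s)"
    using eq_endpt[OF CX] by blast
  have p3: "\<forall>v\<in>cV X. finite (stab (carrier G) (actV act) v)" using finstabX_V by blast
  show ?thesis using fiber_bound[OF ax_Ends[OF CX] ax_V[OF CX] p1 p2 finOEndX p3]
    unfolding link_verts_fiber .
qed

lemma le_bound: "\<exists>L. \<forall>x\<in>cV X. finite (link_edges X x) \<and> card (link_edges X x) \<le> L"
proof -
  have p1: "\<forall>s\<in>corners X. corner_vertex X s \<in> cV X" using cv_V[OF wfX] by blast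
  have p2: "\<forall>g\<in>carrier G. \<forall>s\<in>corners X. corner_vertex X (actC X act g s) = actV act g (corner_vertex X s)"
    using eq_cv[OF CX] by blast
  have p3: "\<forall>v\<in>cV X. finite (stab (carrier G) (actV act) v)" using finstabX_V by blast
  show ?thesis using fiber_bound[OF ax_C[OF CX] ax_V[OF CX] p1 p2 finOCX p3]
    unfolding link_edges_fiber .
qed

lemma sx_bound: "\<exists>L. \<forall>x\<in>cV X. card (stab (carrier G) (actV act) x) \<le> L"
  using stab_bound[OF ax_V[OF CX] finOVX] finstabX_V by blast

lemma lv_fin: "x \<in> cV X \<Longrightarrow> finite (link_verts X x)" using lv_bound by blast
lemma le_fin: "x \<in> cV X \<Longrightarrow> finite (link_edges X x)" using le_bound by blast

lemma vertex_in_Bvals: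
  assumes v: "v \<in> orbs H (actV actY) (cV Y)"
  shows "kappa_vertex H Y actY angY v \<in> Bvals G X act ang"
proof -
  define y where "y = rep v"
  have y: "y \<in> cV Y" using rep_S[OF ax_V[OF CY] v] y_def by simp
  define x where "x = mV phi y"
  have x: "x \<in> cV X" using phiV[OF y] x_def by simp
  define K where "K = stab H (actV actY) y"
  define Vs where "Vs = cmapEnd phi ` link_verts Y y"
  define Es where "Es = cmapC Y phi ` link_edges Y y"
  have Ksg: "subgroup K G" unfolding K_def by (rule stab_subgroup[OF ax_V[OF CY] y])
  have KH: "K \<subseteq> H" unfolding K_def stab_def by auto
  have KG: "K \<subseteq> carrier G" using KH HG by blast
  have Kx: "K \<subseteq> stab (carrier G) (actV act) x" unfolding K_def x_def by (rule stabY_V[OF y])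
  have axLV: "act_ax G K (actEnd actY) (link_verts Y y)"
    unfolding K_def link_verts_fiber
    by (rule fiber_ax[OF ax_Ends[OF CY] ax_V[OF CY] _ y]) (use eq_endpt[OF CY] in blast)
  have axLE: "act_ax G K (actC Y actY) (link_edges Y y)"
    unfolding K_def link_edges_fiber
    by (rule fiber_ax[OF ax_C[OF CY] ax_V[OF CY] _ y]) (use eq_cv[OF CY] in blast)
  have LVE: "link_verts Y y \<subseteq> Ends Y" unfolding link_verts_fiber by auto
  have LEC: "link_edges Y y \<subseteq> corners Y" unfolding link_edges_fiber by auto
  have VsX: "Vs \<subseteq> link_verts X x"
  proof
    fix z assume "z \<in> Vs"
    then obtain s where s: "s \<in> link_verts Y y" "z = cmapEnd phi s" unfolding Vs_def by blast
    have e: "fst s \<in> cE Y" "endpt Y s = y" using s unfolding link_verts_def by auto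
    show "z \<in> link_verts X x" using cm_end[OF mphi e(1)] e(2) s(2) x_def unfolding link_verts_def by simp
  qed
  have EsX: "Es \<subseteq> link_edges X x"
  proof
    fix z assume "z \<in> Es"
    then obtain c where c: "c \<in> link_edges Y y" "z = cmapC Y phi c" unfolding Es_def by blast
    have cc: "c \<in> corners Y" "corner_vertex Y c = y" using c unfolding link_edges_def by auto
    show "z \<in> link_edges X x" using cm_corner_in[OF mphi wfY cc(1)] cm_corner_vertex[OF mphi wfY cc(1)]
      cc(2) c(2) x_def unfolding link_edges_def by simp
  qed
  have VsE: "Vs \<subseteq> Ends X" using VsX unfolding link_verts_fiber by auto
  have EsC: "Es \<subseteq> corners X" using EsX unfolding link_edges_fiber by auto
  have Vinv: "\<forall>g\<in>K. \<forall>z\<in>Vs. actEnd act g z \<in> Vs"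
  proof (intro ballI)
    fix g z assume g: "g \<in> K" and "z \<in> Vs"
    then obtain s where s: "s \<in> link_verts Y y" "z = cmapEnd phi s" unfolding Vs_def by blast
    have "actEnd act g z = cmapEnd phi (actEnd actY g s)" using eqEnd[of g s] g KH s LVE by (metis subsetD)
    thus "actEnd act g z \<in> Vs" unfolding Vs_def using cl[OF axLV g s(1)] by blast
  qed
  have Einv: "\<forall>g\<in>K. \<forall>z\<in>Es. actC X act g z \<in> Es"
  proof (intro ballI)
    fix g z assume g: "g \<in> K" and "z \<in> Es"
    then obtain c where c: "c \<in> link_edges Y y" "z = cmapC Y phi c" unfolding Es_def by blast
    have "actC X act g z = cmapC Y phi (actC Y actY g c)" using eqC[of g c] g KH c LEC by (metis subsetD)
    thus "actC X act g z \<in> Es" unfolding Es_def using cl[OF axLE g c(1)] by blast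
  qed
  have axVs: "act_ax G K (actEnd act) Vs"
    by (rule act_ax_restrict[OF ax_Ends[OF CX] Ksg KG VsE Vinv])
  have axEs: "act_ax G K (actC X act) Es"
    by (rule act_ax_restrict[OF ax_C[OF CX] Ksg KG EsC Einv])
  have ends_ok: "\<forall>c\<in>Es. fst (link_ends X c) \<in> Vs \<and> snd (link_ends X c) \<in> Vs"
  proof
    fix z assume "z \<in> Es"
    then obtain c where c: "c \<in> link_edges Y y" "z = cmapC Y phi c" unfolding Es_def by blast
    have cc: "c \<in> corners Y" using c unfolding link_edges_def by auto
    have "fst (link_ends Y c) \<in> link_verts Y y" "snd (link_ends Y c) \<in> link_verts Y y"
      using link_ends_in[OF wfY c(1)] by auto
    thus "fst (link_ends X z) \<in> Vs \<and> snd (link_ends X z) \<in> Vs"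
      unfolding c(2) cm_link_ends[OF mphi wfY cc] Vs_def by auto
  qed
  have fVs: "finite Vs" using VsX lv_fin[OF x] finite_subset by blast
  have fEs: "finite Es" using EsX le_fin[OF x] finite_subset by blast
  have sec: "is_section X act K x Vs Es"
    unfolding is_section_def using VsX EsX ends_ok Vinv Einv fVs fEs
    by (simp add: orbs_def)
  have injV: "inj_on (cmapEnd phi) (link_verts Y y)" using a9 y unfolding immersion_def by blast
  have injE: "inj_on (cmapC Y phi) (link_edges Y y)" using a9 y unfolding immersion_def by blast
  have eqvV: "\<forall>g\<in>K. \<forall>s\<in>link_verts Y y. cmapEnd phi (actEnd actY g s) = actEnd act g (cmapEnd phi s)"
    using eqEnd KH LVE by blast
  have eqvE: "\<forall>g\<in>K. \<forall>s\<in>link_edges Y y. cmapC Y phi (actC Y actY g s) = actC X act g (cmapC Y phi s)"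
    using eqC KH LEC by blast
  have w1: "wsum K (actEnd act) Vs (\<lambda>_. pi) = wsum K (actEnd actY) (link_verts Y y) (\<lambda>_. pi)"
    by (rule inj_reindex[OF axLV axVs injV Vs_def[symmetric] eqvV]) (auto simp: finv_def)
  have finvX: "finv K (actC X act) Es (\<lambda>c. pi - ang c)"
    unfolding finv_def using a2 KG EsC by (auto simp: actC_def)
  have finvY: "finv K (actC Y actY) (link_edges Y y) (\<lambda>c. pi - angY c)"
    using angY_inv KH LEC unfolding finv_def by blast
  have w2: "wsum K (actC X act) Es (\<lambda>c. pi - ang c) = wsum K (actC Y actY) (link_edges Y y) (\<lambda>c. pi - angY c)"
    by (rule inj_reindex[OF axLE axEs injE Es_def[symmetric] eqvE finvY finvX]) simp
  have "kappa_vertex H Y actY angY v = kappa_graph K (actEnd act) Vs (actC X act) Es ang"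
    unfolding kappa_vertex_def Let_def kappa_graph_wsum y_def[symmetric] K_def[symmetric] using w1 w2 by simp
  thus ?thesis unfolding Bvals_def using x Ksg Kx sec by blast
qed

lemma ang_fin: "finite (ang ` corners X)"
proof -
  have "ang ` corners X \<subseteq> (\<lambda>Q. ang (rep Q)) ` orbs (carrier G) (actC X act) (corners X)"
  proof
    fix z assume "z \<in> ang ` corners X"
    then obtain c where c: "c \<in> corners X" "z = ang c" by blast
    define Q where "Q = orb (carrier G) (actC X act) c"
    have Q: "Q \<in> orbs (carrier G) (actC X act) (corners X)" unfolding Q_def orbs_def using c by blast
    have "rep Q \<in> Q" using rep_in[OF ax_C[OF CX] Q] .
    then obtain g where g: "g \<in> carrier G" "rep Q = actC X act g c" unfolding Q_def orb_def by blast
    have "ang (rep Q) = ang c" using g a2 c unfolding actC_def by simp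
    thus "z \<in> (\<lambda>Q. ang (rep Q)) ` orbs (carrier G) (actC X act) (corners X)" using Q c by force
  qed
  thus ?thesis using finOCX finite_subset by blast
qed

lemma Bvals_finite: "finite (Bvals G X act ang)"
proof -
  obtain Lv where Lv: "\<forall>x\<in>cV X. finite (link_verts X x) \<and> card (link_verts X x) \<le> Lv" using lv_bound by blast
  obtain Le where Le: "\<forall>x\<in>cV X. finite (link_edges X x) \<and> card (link_edges X x) \<le> Le" using le_bound by blast
  obtain Ls where Ls: "\<forall>x\<in>cV X. card (stab (carrier G) (actV act) x) \<le> Ls" using sx_bound by blast
  define R where "R = (\<lambda>n. 1 / real n) ` {..Ls}"
  define T1 where "T1 = (\<lambda>r. pi * r) ` R"
  define T2 where "T2 = (\<lambda>(a, r). (pi - a) * r) ` (ang ` corners X \<times> R)"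
  have fR: "finite R" unfolding R_def by simp
  have "Bvals G X act ang \<subseteq> (\<lambda>(r, A, B). 2 * pi * r - A + B) ` (R \<times> sums_set Lv T1 \<times> sums_set Le T2)"
  proof
    fix k assume "k \<in> Bvals G X act ang"
    then obtain x K Vs Es where k: "k = kappa_graph K (actEnd act) Vs (actC X act) Es ang"
      and x: "x \<in> cV X" and Ksg: "subgroup K G" and Kx: "K \<subseteq> stab (carrier G) (actV act) x"
      and sec: "is_section X act K x Vs Es" unfolding Bvals_def by blast
    have invR: "invc A \<in> R" if A: "A \<subseteq> K" for A
    proof -
      have fS: "finite (stab (carrier G) (actV act) x)" using finstabX_V[OF x] .
      have AS: "A \<subseteq> stab (carrier G) (actV act) x" using A Kx by blast
      hence fA: "finite A" using fS finite_subset by blast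
      have "card A \<le> card (stab (carrier G) (actV act) x)" using card_mono[OF fS AS] .
      hence "card A \<le> Ls" using Ls x by (meson le_trans)
      note fA this
      thus ?thesis unfolding invc_def R_def by simp
    qed
    have VsX: "Vs \<subseteq> link_verts X x" and EsX: "Es \<subseteq> link_edges X x"
      and Vinv: "\<forall>g\<in>K. \<forall>v\<in>Vs. actEnd act g v \<in> Vs" and Einv: "\<forall>g\<in>K. \<forall>c\<in>Es. actC X act g c \<in> Es"
      using sec unfolding is_section_def by auto
    have fLV: "finite (link_verts X x)" and cLV: "card (link_verts X x) \<le> Lv" using Lv x by auto
    have fVs: "finite Vs" using VsX fLV finite_subset by blast
    have cVs: "card Vs \<le> Lv" using card_mono[OF fLV VsX] cLV by linarith
    have fLE: "finite (link_edges X x)" and cLE: "card (link_edges X x) \<le> Le" using Le x by auto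
    have fEs: "finite Es" using EsX fLE finite_subset by blast
    have cEs: "card Es \<le> Le" using card_mono[OF fLE EsX] cLE by linarith
    have oneK: "\<one>\<^bsub>G\<^esub> \<in> K" using subgroup.one_closed[OF Ksg] .
    have repin: "rep Ob \<in> Ob" if "Ob \<in> orbs K a S" for Ob and a :: "'g \<Rightarrow> 'z \<Rightarrow> 'z" and S
    proof -
      have "Ob \<noteq> {}" using that oneK unfolding orbs_def orb_def by blast
      thus ?thesis unfolding rep_def by (meson ex_in_conv someI_ex)
    qed
    define A1 where "A1 = (\<Sum>Ob\<in>orbs K (actEnd act) Vs. pi * invc (stab K (actEnd act) (rep Ob)))"
    define B1 where "B1 = (\<Sum>Ob\<in>orbs K (actC X act) Es. (pi - ang (rep Ob)) * invc (stab K (actC X act) (rep Ob)))"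
    have kk: "k = 2 * pi * invc K - A1 + B1" unfolding k kappa_graph_def A1_def B1_def by simp
    have r: "invc K \<in> R" using invR by blast
    have stK: "stab K a z \<subseteq> K" for a :: "'g \<Rightarrow> 'z \<Rightarrow> 'z" and z unfolding stab_def by auto
    have A1in: "A1 \<in> sums_set Lv T1" unfolding A1_def
    proof (rule sum_in_sums_set)
      show "finite (orbs K (actEnd act) Vs)" unfolding orbs_def using fVs by simp
      show "card (orbs K (actEnd act) Vs) \<le> Lv" unfolding orbs_def using cVs card_image_le[OF fVs] le_trans by blast
      show "\<forall>a\<in>orbs K (actEnd act) Vs. pi * invc (stab K (actEnd act) (rep a)) \<in> T1"
      proof
        fix Ob assume "Ob \<in> orbs K (actEnd act) Vs"
        show "pi * invc (stab K (actEnd act) (rep Ob)) \<in> T1"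
          unfolding T1_def by (rule imageI[OF invR[OF stK]])
      qed
    qed
    have B1in: "B1 \<in> sums_set Le T2" unfolding B1_def
    proof (rule sum_in_sums_set)
      show "finite (orbs K (actC X act) Es)" unfolding orbs_def using fEs by simp
      show "card (orbs K (actC X act) Es) \<le> Le" unfolding orbs_def using cEs card_image_le[OF fEs] le_trans by blast
      show "\<forall>Ob\<in>orbs K (actC X act) Es. (pi - ang (rep Ob)) * invc (stab K (actC X act) (rep Ob)) \<in> T2"
      proof
        fix Ob assume Ob: "Ob \<in> orbs K (actC X act) Es"
        have "rep Ob \<in> Ob" using repin[OF Ob] .
        then obtain c g where "c \<in> Es" "g \<in> K" "rep Ob = actC X act g c" using Ob unfolding orbs_def orb_def by blast
        hence "rep Ob \<in> Es" using Einv by auto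
        hence rc: "rep Ob \<in> corners X" using EsX unfolding link_edges_def by auto
        have "(ang (rep Ob), invc (stab K (actC X act) (rep Ob))) \<in> ang ` corners X \<times> R"
          using imageI[OF rc, of ang] invR[OF stK, of "actC X act" "rep Ob"] by (rule SigmaI)
        thus "(pi - ang (rep Ob)) * invc (stab K (actC X act) (rep Ob)) \<in> T2"
          unfolding T2_def by (rule image_eqI[rotated]) simp
      qed
    qed
    show "k \<in> (\<lambda>(r, A, B). 2 * pi * r - A + B) ` (R \<times> sums_set Lv T1 \<times> sums_set Le T2)"
      using kk r A1in B1in by (intro image_eqI[where x="(invc K, A1, B1)"]) auto
  qed
  moreover have "finite ((\<lambda>(r, A, B). 2 * pi * r - A + B) ` (R \<times> sums_set Lv T1 \<times> sums_set Le T2))"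
  proof -
    have "finite T1" unfolding T1_def using fR by simp
    moreover have "finite T2" unfolding T2_def by (rule finite_imageI[OF finite_cartesian_product[OF ang_fin fR]])
    ultimately show ?thesis using fR by (intro finite_imageI finite_cartesian_product sums_set_finite)
  qed
  ultimately show ?thesis by (rule finite_subset)
qed

lemma main_ineq:
  "real (card (nega H Y actY angY))
     \<le> (2 * pi * euler_char H Y actY - Bplus G X act ang * real (card (posi H Y actY angY))) / Bminus G X act ang"
proof -
  define OV where "OV = orbs H (actV actY) (cV Y)"
  define kv where "kv v = kappa_vertex H Y actY angY v" for v
  define Sm where "Sm = {k \<in> Bvals G X act ang. k < 0}"
  define Sp where "Sp = {k \<in> Bvals G X act ang. k \<ge> 0}"
  define Bm where "Bm = Bminus G X act ang"
  define Bp where "Bp = Bplus G X act ang"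
  have fSm: "finite Sm" unfolding Sm_def using Bvals_finite by simp
  have fSp: "finite Sp" unfolding Sp_def using Bvals_finite by simp
  have Bm_def': "Bm = (if Sm = {} then -1 else Max Sm)" unfolding Bm_def Bminus_def Sm_def Let_def by simp
  have Bp_def': "Bp = (if Sp = {} then 0 else Max Sp)" unfolding Bp_def Bplus_def Sp_def Let_def by simp
  have Bmneg: "Bm < 0"
  proof (cases "Sm = {}")
    case True thus ?thesis using Bm_def' by simp
  next
    case False
    hence "Max Sm \<in> Sm" using fSm by simp
    thus ?thesis using Bm_def' False unfolding Sm_def by simp
  qed
  have kbound: "kv v \<le> (if kv v < 0 then Bm else 0) + (if kv v > 0 then Bp else 0)" if v: "v \<in> OV" for v
  proof -
    have inB: "kv v \<in> Bvals G X act ang" unfolding kv_def using vertex_in_Bvals v OV_def by blast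
    show ?thesis
    proof (cases "kv v < 0")
      case True
      hence "kv v \<in> Sm" unfolding Sm_def using inB by simp
      hence "kv v \<le> Max Sm" "Sm \<noteq> {}" using fSm by auto
      thus ?thesis using True Bm_def' by simp
    next
      case False
      show ?thesis
      proof (cases "kv v > 0")
        case True
        hence "kv v \<in> Sp" unfolding Sp_def using inB by simp
        hence "kv v \<le> Max Sp" "Sp \<noteq> {}" using fSp by auto
        thus ?thesis using True False Bp_def' by simp
      next
        case False2: False
        thus ?thesis using False by simp
      qed
    qed
  qed
  have fOV: "finite OV" unfolding OV_def using finOV .
  have "2 * pi * euler_char H Y actY \<le> (\<Sum>v\<in>OV. kv v)"
    unfolding OV_def kv_def using gauss_bonnet .
  also have "\<dots> \<le> (\<Sum>v\<in>OV. (if kv v < 0 then Bm else 0) + (if kv v > 0 then Bp else 0))"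
    using kbound by (rule sum_mono)
  also have "\<dots> = (\<Sum>v\<in>{v\<in>OV. kv v < 0}. Bm) + (\<Sum>v\<in>{v\<in>OV. kv v > 0}. Bp)"
    by (simp add: sum.distrib flip: sum.inter_filter[OF fOV])
  also have "\<dots> = real (card (nega H Y actY angY)) * Bm + real (card (posi H Y actY angY)) * Bp"
    unfolding nega_def posi_def OV_def kv_def by simp
  finally have "2 * pi * euler_char H Y actY - Bp * real (card (posi H Y actY angY))
      \<le> real (card (nega H Y actY angY)) * Bm" by (simp add: algebra_simps)
  thus ?thesis using Bmneg unfolding Bm_def[symmetric] Bp_def[symmetric] by (simp add: le_divide_eq)
qed

end

theorem lemma7p12:
  fixes G :: "'g monoid"
    and X :: "('v,'e,'f) cplx" and act :: "'g \<Rightarrow> ('v,'e,'f,'v,'e,'f) cmorph"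
    and ang :: "'f \<times> nat \<Rightarrow> real"
    and H :: "'g set"
    and Y :: "('w,'d,'h) cplx" and actY :: "'g \<Rightarrow> ('w,'d,'h,'w,'d,'h) cmorph"
    and phi :: "('w,'d,'h,'v,'e,'f) cmorph"
  assumes "group_cact G act X"
    and "\<forall>g\<in>carrier G. \<forall>c\<in>corners X. ang (cmapC X (act g) c) = ang c"
    and "proper_act (carrier G) X act"
    and "cocompact_act (carrier G) X act"
    and "\<forall>f\<in>cF X. kappa_face X ang f \<le> 0"
    and "subgroup H G"
    and "group_cact (G\<lparr>carrier := H\<rparr>) actY Y"
    and "cocompact_act H Y actY"
    and "immersion Y X phi"
    and "equivariant H Y X actY act phi"
  shows "real (card (nega H Y actY (\<lambda>c. ang (cmapC Y phi c))))
           \<le> (2 * pi * euler_char H Y actY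
               - Bplus G X act ang * real (card (posi H Y actY (\<lambda>c. ang (cmapC Y phi c)))))
             / Bminus G X act ang"
    using main_ineq[OF assms] .

end
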